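(* Let $\boldsymbol\theta$ be a minimizer of the loss $\mathcal{L}$ at which $\mathcal{L}$ is twice differentiable, with network function $f=f_{\boldsymbol\theta}\in\mathcal{F}_k$ satisfying $f(\boldsymbol x_j)=y_j$ for all $j$. Then $$\lambda_{\max}\big(\nabla^2_{\boldsymbol\theta}\mathcal{L}(\boldsymbol\theta)\big)\ge 1+2\|f\|_{\mathcal{R},g}.$$
   Context: Training set $\{(\boldsymbol x_j,y_j)\}_{j=1}^n\subset\mathbb{R}^d\times\mathbb{R}$. $\sigma(t)=\max(t,0)$; $f_{\boldsymbol\theta}(\boldsymbol x)=\sum_{i=1}^k w^{(2)}_i\sigma(\boldsymbol x^\top\boldsymbol w^{(1)}_i+b^{(1)}_i)+b^{(2)}$ with $\boldsymbol\theta=(\boldsymbol w^{(1)}_1,\dots,\boldsymbol w^{(1)}_k,\boldsymbol b^{(1)},\boldsymbol w^{(2)},b^{(2)})\in\mathbb{R}^{(d+2)k+1}$, and $\mathcal{F}_k$ is the set of all such functions. Loss $\mathcal{L}(\boldsymbol\theta)=\frac1{2n}\sum_j(f_{\boldsymbol\theta}(\boldsymbol x_j)-y_j)^2$. $\boldsymbol X$ is drawn uniformly from $\{\boldsymbol x_j\}$; $\tilde g(\boldsymbol v,b)=\mathbb{P}^2(\boldsymbol X^\top\boldsymbol v>b)\,\mathbb{E}[\boldsymbol X^\top\boldsymbol v-b\mid\boldsymbol X^\top\boldsymbol v>b]\sqrt{\|\mathbb{E}[\boldsymbol X\mid\boldsymbol X^\top\boldsymbol v>b]\|^2+1}$ (taken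 $0$ when the event has probability zero), $g(\boldsymbol v,b)=\min(\tilde g(\boldsymbol v,b),\tilde g(-\boldsymbol v,-b))$. Writing $f(\boldsymbol x)=\sum_i a_i\sigma(\boldsymbol v_i^\top\boldsymbol x-b_i)+\boldsymbol q^\top\boldsymbol x+c$ with $\|\boldsymbol v_i\|=1$, the distribution $(\mathcal{R}^* )^{-1}\Delta f$ ($\mathcal{R}$ the Radon transform on $\mathbb{S}^{d-1}\times\mathbb{R}$, $\Delta$ the distributional Laplacian) equals the measure $\sum_i a_i\delta_{(\boldsymbol v_i,b_i)}$, and $\|f\|_{\mathcal{R},g}=\int_{\mathbb{S}^{d-1}\times\mathbb{R}}|(\mathcal{R}^* )^{-1}\Delta f|\,g$ is the integral of $g$ against its total variation measure. *)

theory Defs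
  imports "HOL-Analysis.Analysis"
begin

definition relu :: "real \<Rightarrow> real" where
  "relu t = max t 0"

text \<open>Parameter vector theta = (w1, b1, w2, b2): w1 $ i is the first-layer weight vector of
  neuron i (in R^d), b1 $ i its bias, w2 $ i its output weight, b2 the output bias.\<close>
type_synonym ('d, 'k) params = "((real^'d)^'k) \<times> (real^'k) \<times> (real^'k) \<times> real"

definition net :: "('d::finite, 'k::finite) params \<Rightarrow> real^'d \<Rightarrow> real" where
  "net \<theta> z = (case \<theta> of (w1, b1, w2, b2) \<Rightarrow>
      (\<Sum>i\<in>UNIV. (w2 $ i) * relu (inner z (w1 $ i) + (b1 $ i))) + b2)"

definition loss :: "nat \<Rightarrow> (nat \<Rightarrow> real^'d) \<Rightarrow> (nat \<Rightarrow> real)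
                    \<Rightarrow> ('d::finite, 'k::finite) params \<Rightarrow> real" where
  "loss n x y \<theta> = (1 / (2 * real n)) * (\<Sum>j<n. (net \<theta> (x j) - y j)^2)"

definition grad :: "('a::euclidean_space \<Rightarrow> real) \<Rightarrow> 'a \<Rightarrow> 'a" where
  "grad F z = (\<Sum>e\<in>Basis. frechet_derivative F (at z) e *\<^sub>R e)"

definition twice_diff_hessian :: "('a::euclidean_space \<Rightarrow> real) \<Rightarrow> 'a \<Rightarrow> ('a \<Rightarrow> 'a) \<Rightarrow> bool" where
  "twice_diff_hessian F z H \<longleftrightarrow>
     (\<exists>S. open S \<and> z \<in> S \<and> (\<forall>w\<in>S. F differentiable (at w))) \<and>
     (grad F has_derivative H) (at z)"

definition lambda_max :: "('a::euclidean_space \<Rightarrow> 'a) \<Rightarrow> real" where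
  "lambda_max H = Max {l. \<exists>u. u \<noteq> 0 \<and> H u = l *\<^sub>R u}"

text \<open>X uniform on the empirical sample (indices j < n).  Set of indices with x_j . v > b.\<close>
definition active :: "nat \<Rightarrow> (nat \<Rightarrow> real^'d) \<Rightarrow> real^'d \<Rightarrow> real \<Rightarrow> nat set" where
  "active n x v b = {j. j < n \<and> x j \<bullet> v > b}"

text \<open>g tilde (v,b) = P(X.v>b)^2 * E[X.v - b | X.v>b] * sqrt(|E[X | X.v>b]|^2 + 1),
  taken to be 0 when the event has probability zero.\<close>
definition g_tilde :: "nat \<Rightarrow> (nat \<Rightarrow> real^'d) \<Rightarrow> real^'d \<Rightarrow> real \<Rightarrow> real" where
  "g_tilde n x v b =
     (let J = active n x v b in
      if J = {} then 0 else
        (real (card J) / real n)^2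
        * ((\<Sum>j\<in>J. x j \<bullet> v - b) / real (card J))
        * sqrt ((norm ((1 / real (card J)) *\<^sub>R (\<Sum>j\<in>J. x j)))^2 + 1))"

definition g_fun :: "nat \<Rightarrow> (nat \<Rightarrow> real^'d) \<Rightarrow> real^'d \<Rightarrow> real \<Rightarrow> real" where
  "g_fun n x v b = min (g_tilde n x v b) (g_tilde n x (- v) (- b))"

text \<open>For a representation f(x) = sum_{i<m} a_i relu(v_i.x - b_i) + q.x + c with |v_i| = 1,
  the measure (R^* )^{-1} Delta f on S^{d-1} x R, as an even finitely supported measure:
  the atom of neuron i is split evenly between (v_i,b_i) and (-v_i,-b_i) (the two
  parametrisations of the same hyperplane).\<close>
definition radon_atoms :: "nat \<Rightarrow> (nat \<Rightarrow> real) \<Rightarrow> (nat \<Rightarrow> real^'d) \<Rightarrow> (nat \<Rightarrow> real)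
                          \<Rightarrow> (real^'d) \<times> real \<Rightarrow> real" where
  "radon_atoms m a v b p =
     (\<Sum>i\<in>{i. i < m \<and> ((v i, b i) = p \<or> (v i, b i) = (- fst p, - snd p))}. a i) / 2"

definition radon_support :: "nat \<Rightarrow> (nat \<Rightarrow> real^'d) \<Rightarrow> (nat \<Rightarrow> real) \<Rightarrow> ((real^'d) \<times> real) set" where
  "radon_support m v b = (\<lambda>i. (v i, b i)) ` {..<m} \<union> (\<lambda>i. (- v i, - b i)) ` {..<m}"

definition radon_norm :: "(real^'d \<Rightarrow> real \<Rightarrow> real) \<Rightarrow> nat \<Rightarrow> (nat \<Rightarrow> real)
                          \<Rightarrow> (nat \<Rightarrow> real^'d) \<Rightarrow> (nat \<Rightarrow> real) \<Rightarrow> real" where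
  "radon_norm w m a v b = (\<Sum>p\<in>radon_support m v b. \<bar>radon_atoms m a v b p\<bar> * w (fst p) (snd p))"

end

theory Submission
  imports Defs
begin


lemma grad_inner:
  fixes F :: "'a::euclidean_space \<Rightarrow> real"
  assumes "F differentiable (at w)"
  shows "(F has_derivative (\<lambda>p. grad F w \<bullet> p)) (at w)"
proof -
  let ?f = "frechet_derivative F (at w)"
  have d: "(F has_derivative ?f) (at w)" using assms frechet_derivative_works by blast
  have lin: "linear ?f" using d has_derivative_linear by blast
  have eq: "?f p = grad F w \<bullet> p" for p
  proof -
    have "?f p = ?f (\<Sum>b\<in>Basis. (p \<bullet> b) *\<^sub>R b)" by (simp add: euclidean_representation)
    also have "\<dots> = (\<Sum>b\<in>Basis. (p \<bullet> b) * ?f b)" using lin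
      by (simp add: linear_sum linear_scale)
    also have "\<dots> = grad F w \<bullet> p" unfolding grad_def
      by (simp add: inner_sum_right inner_commute mult.commute)
    finally show ?thesis .
  qed
  have "?f = (\<lambda>p. grad F w \<bullet> p)" using eq by auto
  then show ?thesis using d by simp
qed

lemma line_deriv:
  fixes F :: "'a::euclidean_space \<Rightarrow> real"
  assumes "F differentiable (at (a + t *\<^sub>R p))"
  shows "((\<lambda>t. F (a + t *\<^sub>R p)) has_real_derivative (grad F (a + t *\<^sub>R p) \<bullet> p)) (at t)"
proof -
  have l: "((\<lambda>t. a + t *\<^sub>R p) has_derivative (\<lambda>t. t *\<^sub>R p)) (at t)"
    by (auto intro!: derivative_eq_intros)
  have "((\<lambda>t. F (a + t *\<^sub>R p)) has_derivative (\<lambda>x. grad F (a + t *\<^sub>R p) \<bullet> (x *\<^sub>R p))) (at t)"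
    using has_derivative_compose[OF l grad_inner[OF assms]] by simp
  then show ?thesis
    by (rule has_derivative_imp_has_field_derivative) (simp add: mult.commute)
qed

lemma mvt01:
  fixes \<phi> :: "real \<Rightarrow> real"
  assumes "\<And>t. 0 \<le> t \<Longrightarrow> t \<le> 1 \<Longrightarrow> (\<phi> has_real_derivative \<phi>' t) (at t)"
    and "\<And>t. 0 \<le> t \<Longrightarrow> t \<le> 1 \<Longrightarrow> \<bar>\<phi>' t\<bar> \<le> B"
  shows "\<bar>\<phi> 1 - \<phi> 0\<bar> \<le> B"
proof -
  obtain zz where "zz > 0" "zz < 1" "\<phi> 1 - \<phi> 0 = (1 - 0) * \<phi>' zz"
    using MVT2[of 0 1 \<phi> \<phi>'] assms(1) by force
  then show ?thesis using assms(2)[of zz] by simp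
qed

lemma hess_setup:
  fixes F :: "'a::euclidean_space \<Rightarrow> real"
  assumes "twice_diff_hessian F z H"
  obtains r where "r > 0" "\<And>w. norm (w - z) < r \<Longrightarrow> F differentiable (at w)"
    "bounded_linear H"
    "\<And>e. e > 0 \<Longrightarrow> \<exists>d>0. \<forall>y. norm (y - z) < d \<longrightarrow>
        norm (grad F y - grad F z - H (y - z)) \<le> e * norm (y - z)"
proof -
  obtain S where S: "open S" "z \<in> S" "\<forall>w\<in>S. F differentiable (at w)"
    and D: "(grad F has_derivative H) (at z)"
    using assms unfolding twice_diff_hessian_def by blast
  obtain r where r: "r > 0" "ball z r \<subseteq> S" using S open_contains_ball by blast
  have "\<And>w. norm (w - z) < r \<Longrightarrow> F differentiable (at w)"
    using r S by (metis dist_commute dist_norm mem_ball subsetD)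
  then show ?thesis using that r D unfolding has_derivative_at_alt by blast
qed

lemma hess_taylor_eps:
  fixes F :: "'a::euclidean_space \<Rightarrow> real"
  assumes th: "twice_diff_hessian F z H" and g0: "grad F z = 0" and e: "e > 0"
  shows "\<exists>\<delta>>0. \<forall>s. 0 < s \<and> s < \<delta> \<longrightarrow>
           \<bar>F (z + s *\<^sub>R h) - F z - s^2 / 2 * (h \<bullet> H h)\<bar> \<le> e * s^2"
proof -
  obtain r where r: "r > 0" "\<And>w. norm (w - z) < r \<Longrightarrow> F differentiable (at w)"
    and bl: "bounded_linear H"
    and dd: "\<And>e. e > 0 \<Longrightarrow> \<exists>d>0. \<forall>y. norm (y - z) < d \<longrightarrow>
        norm (grad F y - grad F z - H (y - z)) \<le> e * norm (y - z)"
    using hess_setup[OF th] by metis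
  have lin: "linear H" using bl bounded_linear.linear by blast
  define e' where "e' = e / ((norm h)^2 + 1)"
  have e'pos: "e' > 0" unfolding e'_def using e
    by (intro divide_pos_pos) (auto intro: add_nonneg_pos)
  obtain d where d: "d > 0" "\<forall>y. norm (y - z) < d \<longrightarrow>
        norm (grad F y - grad F z - H (y - z)) \<le> e' * norm (y - z)"
    using dd[OF e'pos] by blast
  define \<delta> where "\<delta> = min d r / (norm h + 1)"
  have hp1: "norm h + 1 > 0" by (simp add: add_nonneg_pos)
  have \<delta>pos: "\<delta> > 0" unfolding \<delta>_def using d(1) r(1)
    by (intro divide_pos_pos) (auto intro: add_nonneg_pos)
  show ?thesis
  proof (intro exI[of _ \<delta>] conjI allI impI)
    show "\<delta> > 0" by fact
    fix s :: real assume s: "0 < s \<and> s < \<delta>"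
    have sh: "s * norm h < min d r"
    proof -
      have "s * norm h \<le> s * (norm h + 1)" using s by simp
      also have "\<dots> < \<delta> * (norm h + 1)" using s hp1 by (intro mult_strict_right_mono) auto
      also have "\<dots> = min d r" unfolding \<delta>_def using hp1 by simp
      finally show ?thesis .
    qed
    define Q where "Q = h \<bullet> H h"
    define \<phi> where "\<phi> = (\<lambda>t. F (z + t *\<^sub>R (s *\<^sub>R h)) - (t * t) * (s^2 * Q / 2))"
    define \<phi>' where "\<phi>' = (\<lambda>t. grad F (z + t *\<^sub>R (s *\<^sub>R h)) \<bullet> (s *\<^sub>R h) - 2 * t * (s^2 * Q / 2))"
    have yz: "norm ((z + t *\<^sub>R (s *\<^sub>R h)) - z) \<le> s * norm h" if "0 \<le> t" "t \<le> 1" for t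
      using that s by (simp add: mult_left_le_one_le mult.assoc)
    have der: "(\<phi> has_real_derivative \<phi>' t) (at t)" if "0 \<le> t" "t \<le> 1" for t
    proof -
      have dF: "F differentiable (at (z + t *\<^sub>R (s *\<^sub>R h)))"
        using r(2) yz[OF that] sh by force
      show ?thesis unfolding \<phi>_def \<phi>'_def
        by (rule derivative_eq_intros line_deriv[OF dF] | simp)+
    qed
    have bnd: "\<bar>\<phi>' t\<bar> \<le> e' * (s * norm h) * (s * norm h)" if "0 \<le> t" "t \<le> 1" for t
    proof -
      let ?y = "z + t *\<^sub>R (s *\<^sub>R h)"
      have n1: "norm (?y - z) < d" using yz[OF that] sh by linarith
      have E: "norm (grad F ?y - H (t *\<^sub>R (s *\<^sub>R h))) \<le> e' * norm (t *\<^sub>R (s *\<^sub>R h))"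
        using d(2)[rule_format, OF n1] g0 by simp
      have HH: "H (t *\<^sub>R (s *\<^sub>R h)) \<bullet> (s *\<^sub>R h) = 2 * t * (s^2 * Q / 2)"
        using lin by (simp add: linear_scale Q_def inner_commute power2_eq_square)
      have "\<phi>' t = (grad F ?y - H (t *\<^sub>R (s *\<^sub>R h))) \<bullet> (s *\<^sub>R h)"
        unfolding \<phi>'_def using HH by (simp add: inner_diff_left right_diff_distrib)
      then have "\<bar>\<phi>' t\<bar> \<le> norm (grad F ?y - H (t *\<^sub>R (s *\<^sub>R h))) * norm (s *\<^sub>R h)"
        by (metis Cauchy_Schwarz_ineq2)
      also have "\<dots> \<le> e' * norm (t *\<^sub>R (s *\<^sub>R h)) * norm (s *\<^sub>R h)"
        using E by (simp add: mult_right_mono)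
      also have "\<dots> \<le> e' * (s * norm h) * (s * norm h)"
        using yz[OF that] e'pos s by (intro mult_mono mult_left_mono) auto
      finally show ?thesis .
    qed
    have "\<bar>\<phi> 1 - \<phi> 0\<bar> \<le> e' * (s * norm h) * (s * norm h)"
      by (rule mvt01[OF der bnd])
    moreover have "\<phi> 1 - \<phi> 0 = F (z + s *\<^sub>R h) - F z - s^2 / 2 * (h \<bullet> H h)"
      unfolding \<phi>_def Q_def by simp
    moreover have "e' * (s * norm h) * (s * norm h) \<le> e * s^2"
    proof -
      have p: "(norm h)^2 + 1 > 0" by (simp add: add_nonneg_pos)
      have "e' * (norm h)^2 \<le> e"
        unfolding e'_def using e p by (simp add: field_simps)
      then have "e' * (norm h)^2 * s^2 \<le> e * s^2" by (simp add: mult_right_mono)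
      then show ?thesis by (simp add: power2_eq_square algebra_simps)
    qed
    ultimately show "\<bar>F (z + s *\<^sub>R h) - F z - s^2 / 2 * (h \<bullet> H h)\<bar> \<le> e * s^2" by linarith
  qed
qed

lemma hess_mixed_eps:
  fixes F :: "'a::euclidean_space \<Rightarrow> real"
  assumes th: "twice_diff_hessian F z H" and e: "e > 0"
  shows "\<exists>\<delta>>0. \<forall>s. 0 < s \<and> s < \<delta> \<longrightarrow>
      \<bar>F (z + s *\<^sub>R k + s *\<^sub>R h) - F (z + s *\<^sub>R h) - F (z + s *\<^sub>R k) + F z
        - s^2 * (H k \<bullet> h)\<bar> \<le> e * s^2"
proof -
  obtain r where r: "r > 0" "\<And>w. norm (w - z) < r \<Longrightarrow> F differentiable (at w)"
    and bl: "bounded_linear H"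
    and dd: "\<And>e. e > 0 \<Longrightarrow> \<exists>d>0. \<forall>y. norm (y - z) < d \<longrightarrow>
        norm (grad F y - grad F z - H (y - z)) \<le> e * norm (y - z)"
    using hess_setup[OF th] by metis
  have lin: "linear H" using bl bounded_linear.linear by blast
  define C where "C = (norm k + 2 * norm h) * norm h"
  have C0: "C \<ge> 0" unfolding C_def by simp
  define e' where "e' = e / (C + 1)"
  have e'pos: "e' > 0" unfolding e'_def using e C0
    by (intro divide_pos_pos) auto
  obtain d where d: "d > 0" "\<forall>y. norm (y - z) < d \<longrightarrow>
        norm (grad F y - grad F z - H (y - z)) \<le> e' * norm (y - z)"
    using dd[OF e'pos] by blast
  define \<delta> where "\<delta> = min d r / (norm h + norm k + 1)"
  have hp1: "norm h + norm k + 1 > 0" by (simp add: add_nonneg_pos)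
  have \<delta>pos: "\<delta> > 0" unfolding \<delta>_def using d(1) r(1) hp1
    by (intro divide_pos_pos) auto
  show ?thesis
  proof (intro exI[of _ \<delta>] conjI allI impI)
    show "\<delta> > 0" by fact
    fix s :: real assume s: "0 < s \<and> s < \<delta>"
    have sh: "s * (norm h + norm k) < min d r"
    proof -
      have "s * (norm h + norm k) \<le> s * (norm h + norm k + 1)" using s by simp
      also have "\<dots> < \<delta> * (norm h + norm k + 1)" using s hp1 by (intro mult_strict_right_mono) auto
      also have "\<dots> = min d r" unfolding \<delta>_def using hp1 by simp
      finally show ?thesis .
    qed
    define P where "P = H k \<bullet> h"
    define \<psi> where "\<psi> = (\<lambda>t. F (z + s *\<^sub>R k + t *\<^sub>R (s *\<^sub>R h)) - F (z + t *\<^sub>R (s *\<^sub>R h))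
                             - t * (s^2 * P))"
    define \<psi>' where "\<psi>' = (\<lambda>t. grad F (z + s *\<^sub>R k + t *\<^sub>R (s *\<^sub>R h)) \<bullet> (s *\<^sub>R h)
                   - grad F (z + t *\<^sub>R (s *\<^sub>R h)) \<bullet> (s *\<^sub>R h) - s^2 * P)"
    have y2z: "norm ((z + t *\<^sub>R (s *\<^sub>R h)) - z) \<le> s * norm h" if "0 \<le> t" "t \<le> 1" for t
      using that s by (simp add: mult_left_le_one_le mult.assoc)
    have y1z: "norm ((z + s *\<^sub>R k + t *\<^sub>R (s *\<^sub>R h)) - z) \<le> s * (norm h + norm k)"
      if "0 \<le> t" "t \<le> 1" for t
    proof -
      have "norm ((z + s *\<^sub>R k + t *\<^sub>R (s *\<^sub>R h)) - z) = norm (s *\<^sub>R k + t *\<^sub>R (s *\<^sub>R h))"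
        by (simp add: algebra_simps)
      also have "\<dots> \<le> norm (s *\<^sub>R k) + norm (t *\<^sub>R (s *\<^sub>R h))" by (rule norm_triangle_ineq)
      also have "\<dots> \<le> s * norm k + s * norm h"
        using y2z[OF that] s by simp
      finally show ?thesis by (simp add: algebra_simps)
    qed
    have y2z': "norm ((z + t *\<^sub>R (s *\<^sub>R h)) - z) < min d r" if "0 \<le> t" "t \<le> 1" for t
    proof -
      have "s * norm h \<le> s * (norm h + norm k)" using s by simp
      then show ?thesis using y2z[OF that] sh by linarith
    qed
    have y1z': "norm ((z + s *\<^sub>R k + t *\<^sub>R (s *\<^sub>R h)) - z) < min d r" if "0 \<le> t" "t \<le> 1" for t
      using y1z[OF that] sh by linarith
    have der: "(\<psi> has_real_derivative \<psi>' t) (at t)" if "0 \<le> t" "t \<le> 1" for t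
    proof -
      have dF1: "F differentiable (at (z + s *\<^sub>R k + t *\<^sub>R (s *\<^sub>R h)))"
        using r(2) y1z'[OF that] by force
      have dF2: "F differentiable (at (z + t *\<^sub>R (s *\<^sub>R h)))"
        using r(2) y2z'[OF that] by force
      show ?thesis unfolding \<psi>_def \<psi>'_def
        by (rule derivative_eq_intros line_deriv[OF dF1] line_deriv[OF dF2] | simp)+
    qed
    have bnd: "\<bar>\<psi>' t\<bar> \<le> e' * s^2 * C" if "0 \<le> t" "t \<le> 1" for t
    proof -
      let ?y1 = "z + s *\<^sub>R k + t *\<^sub>R (s *\<^sub>R h)"
      let ?y2 = "z + t *\<^sub>R (s *\<^sub>R h)"
      let ?E1 = "grad F ?y1 - grad F z - H (?y1 - z)"
      let ?E2 = "grad F ?y2 - grad F z - H (?y2 - z)"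
      have E1: "norm ?E1 \<le> e' * (s * (norm h + norm k))"
      proof -
        have n: "norm (?y1 - z) < d" using y1z'[OF that] by (auto simp only: min_less_iff_conj)
        have "norm ?E1 \<le> e' * norm (?y1 - z)" using d(2) n by blast
        also have "\<dots> \<le> e' * (s * (norm h + norm k))"
          using y1z[OF that] e'pos by (intro mult_left_mono) auto
        finally show ?thesis .
      qed
      have E2: "norm ?E2 \<le> e' * (s * norm h)"
      proof -
        have n: "norm (?y2 - z) < d" using y2z'[OF that] by (auto simp only: min_less_iff_conj)
        have "norm ?E2 \<le> e' * norm (?y2 - z)" using d(2) n by blast
        also have "\<dots> \<le> e' * (s * norm h)"
          using y2z[OF that] e'pos by (intro mult_left_mono) auto
        finally show ?thesis .
      qed
      have Hd: "H (?y1 - z) - H (?y2 - z) = s *\<^sub>R H k"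
      proof -
        have "H (?y1 - z) - H (?y2 - z) = H ((?y1 - z) - (?y2 - z))" using lin by (simp only: linear_diff)
        also have "(?y1 - z) - (?y2 - z) = s *\<^sub>R k" by (simp add: algebra_simps)
        finally show ?thesis using lin by (simp add: linear_scale)
      qed
      have "\<psi>' t = (?E1 - ?E2) \<bullet> (s *\<^sub>R h) + (H (?y1 - z) - H (?y2 - z)) \<bullet> (s *\<^sub>R h) - s^2 * P"
        unfolding \<psi>'_def by (simp add: inner_diff_left algebra_simps)
      also have "(H (?y1 - z) - H (?y2 - z)) \<bullet> (s *\<^sub>R h) = s^2 * P"
        unfolding Hd P_def by (simp add: power2_eq_square)
      finally have eq: "\<psi>' t = (?E1 - ?E2) \<bullet> (s *\<^sub>R h)" by simp
      have "\<bar>\<psi>' t\<bar> \<le> norm (?E1 - ?E2) * norm (s *\<^sub>R h)" unfolding eq by (rule Cauchy_Schwarz_ineq2)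
      also have "\<dots> \<le> (norm ?E1 + norm ?E2) * (s * norm h)"
        using s norm_triangle_ineq4[of ?E1 ?E2] by (intro mult_mono) auto
      also have "\<dots> \<le> (e' * (s * (norm h + norm k)) + e' * (s * norm h)) * (s * norm h)"
        using E1 E2 s by (intro mult_right_mono) auto
      also have "\<dots> = e' * s^2 * C" unfolding C_def by (simp add: power2_eq_square algebra_simps)
      finally show ?thesis .
    qed
    have "\<bar>\<psi> 1 - \<psi> 0\<bar> \<le> e' * s^2 * C"
      by (rule mvt01[OF der bnd])
    moreover have "\<psi> 1 - \<psi> 0 = F (z + s *\<^sub>R k + s *\<^sub>R h) - F (z + s *\<^sub>R h) - F (z + s *\<^sub>R k) + F z
        - s^2 * (H k \<bullet> h)"
      unfolding \<psi>_def P_def by simp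
    moreover have "e' * s^2 * C \<le> e * s^2"
    proof -
      have "e' * C \<le> e"
        unfolding e'_def using e C0 by (simp add: field_simps)
      then have "e' * C * s^2 \<le> e * s^2" by (simp add: mult_right_mono)
      then show ?thesis by (simp add: algebra_simps)
    qed
    ultimately show "\<bar>F (z + s *\<^sub>R k + s *\<^sub>R h) - F (z + s *\<^sub>R h) - F (z + s *\<^sub>R k) + F z
        - s^2 * (H k \<bullet> h)\<bar> \<le> e * s^2" by linarith
  qed
qed

lemma hess_sym:
  fixes F :: "'a::euclidean_space \<Rightarrow> real"
  assumes th: "twice_diff_hessian F z H"
  shows "H k \<bullet> h = H h \<bullet> k"
proof (rule ccontr)
  assume ne: "H k \<bullet> h \<noteq> H h \<bullet> k"
  define e where "e = \<bar>H k \<bullet> h - H h \<bullet> k\<bar> / 3"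
  have e: "e > 0" using ne by (simp add: e_def)
  obtain d1 where d1: "d1 > 0" "\<forall>s. 0 < s \<and> s < d1 \<longrightarrow>
      \<bar>F (z + s *\<^sub>R k + s *\<^sub>R h) - F (z + s *\<^sub>R h) - F (z + s *\<^sub>R k) + F z
        - s^2 * (H k \<bullet> h)\<bar> \<le> e * s^2"
    using hess_mixed_eps[OF th e, of k h] by blast
  obtain d2 where d2: "d2 > 0" "\<forall>s. 0 < s \<and> s < d2 \<longrightarrow>
      \<bar>F (z + s *\<^sub>R h + s *\<^sub>R k) - F (z + s *\<^sub>R k) - F (z + s *\<^sub>R h) + F z
        - s^2 * (H h \<bullet> k)\<bar> \<le> e * s^2"
    using hess_mixed_eps[OF th e, of h k] by blast
  define s where "s = min d1 d2 / 2"
  have s: "0 < s" "s < d1" "s < d2" using d1 d2 by (auto simp: s_def)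
  note a1 = d1(2)[rule_format, OF conjI[OF s(1) s(2)]]
  note a2 = d2(2)[rule_format, OF conjI[OF s(1) s(3)]]
  have comm: "z + s *\<^sub>R h + s *\<^sub>R k = z + s *\<^sub>R k + s *\<^sub>R h" by (simp add: algebra_simps)
  have "\<bar>s^2 * (H k \<bullet> h) - s^2 * (H h \<bullet> k)\<bar> \<le> 2 * e * s^2"
    using a1 a2 unfolding comm by linarith
  moreover have "\<bar>s^2 * (H k \<bullet> h) - s^2 * (H h \<bullet> k)\<bar> = s^2 * \<bar>H k \<bullet> h - H h \<bullet> k\<bar>"
    by (metis abs_mult abs_power2 right_diff_distrib)
  ultimately have "s^2 * \<bar>H k \<bullet> h - H h \<bullet> k\<bar> \<le> s^2 * (2 * e)" by (simp add: algebra_simps)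
  then have "\<bar>H k \<bullet> h - H h \<bullet> k\<bar> \<le> 2 * e" using s(1) by simp
  then show False using e unfolding e_def by argo
qed



lemma sym_eigen_max:
  fixes H :: "'a::euclidean_space \<Rightarrow> 'a"
  assumes lin: "linear H" and sym: "\<And>x y. H x \<bullet> y = x \<bullet> H y"
  shows "h \<bullet> H h \<le> lambda_max H * (norm h)^2"
proof -
  let ?S = "sphere (0::'a) 1"
  obtain b :: 'a where b: "b \<in> Basis" using nonempty_Basis by blast
  have Sne: "?S \<noteq> {}" using b by (auto simp: norm_Basis)
  have bl: "bounded_linear H" using lin linear_conv_bounded_linear by blast
  have cont: "continuous_on ?S (\<lambda>x. x \<bullet> H x)"
    by (intro continuous_intros linear_continuous_on bl)
  obtain u where uS: "u \<in> ?S" and umax: "\<forall>y\<in>?S. y \<bullet> H y \<le> u \<bullet> H u"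
    using continuous_attains_sup[OF compact_sphere Sne cont] by blast
  define l where "l = u \<bullet> H u"
  have nu: "norm u = 1" using uS by simp
  have uu: "u \<bullet> u = 1" using nu by (simp add: dot_square_norm)
  have allh: "y \<bullet> H y \<le> l * (norm y)^2" for y
  proof (cases "y = 0")
    case True then show ?thesis using lin by (simp add: linear_0)
  next
    case False
    let ?y = "(1 / norm y) *\<^sub>R y"
    have "?y \<in> ?S" using False by simp
    then have "?y \<bullet> H ?y \<le> l" using umax l_def by blast
    moreover have "?y \<bullet> H ?y = (1 / norm y)^2 * (y \<bullet> H y)"
      using lin by (simp only: linear_scale inner_scaleR_left inner_scaleR_right power2_eq_square mult.assoc)
    ultimately have "(1 / norm y)^2 * (y \<bullet> H y) \<le> l" by simp
    then have "(norm y)^2 * ((1 / norm y)^2 * (y \<bullet> H y)) \<le> (norm y)^2 * l"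
      by (simp add: mult_left_mono)
    moreover have "(norm y)^2 * ((1 / norm y)^2 * (y \<bullet> H y)) = y \<bullet> H y"
      using False by (simp add: field_simps)
    ultimately show ?thesis by (metis mult.commute)
  qed
  have eig: "H u = l *\<^sub>R u"
  proof (rule ccontr)
    assume ne: "H u \<noteq> l *\<^sub>R u"
    define w where "w = H u - l *\<^sub>R u"
    have wne: "w \<noteq> 0" using ne by (simp add: w_def)
    define A where "A = w \<bullet> w"
    have A: "A > 0" using wne by (simp add: A_def)
    define C where "C = w \<bullet> H w - l * (w \<bullet> w)"
    have key: "2 * t * A + t^2 * C \<le> 0" for t
    proof -
      have "(u + t *\<^sub>R w) \<bullet> H (u + t *\<^sub>R w) \<le> l * (norm (u + t *\<^sub>R w))^2" by (rule allh)
      moreover have "(u + t *\<^sub>R w) \<bullet> H (u + t *\<^sub>R w)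
          = u \<bullet> H u + t * (u \<bullet> H w) + t * (w \<bullet> H u) + t^2 * (w \<bullet> H w)"
        using lin by (simp add: linear_add linear_scale inner_add_left inner_add_right
            power2_eq_square algebra_simps)
      moreover have "u \<bullet> H w = w \<bullet> H u" using sym[of w u] by (simp add: inner_commute)
      moreover have "(norm (u + t *\<^sub>R w))^2 = 1 + 2 * t * (u \<bullet> w) + t^2 * (w \<bullet> w)"
        unfolding power2_norm_eq_inner using uu by (simp add: inner_add_left inner_add_right
            power2_eq_square algebra_simps inner_commute)
      moreover have "w \<bullet> H u - l * (u \<bullet> w) = A"
        unfolding A_def w_def by (simp add: inner_diff_left inner_diff_right inner_commute algebra_simps)
      ultimately show ?thesis unfolding C_def l_def
        by (simp add: algebra_simps power2_eq_square)
    qed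
    define t where "t = A / (\<bar>C\<bar> + 1)"
    have t: "t > 0" using A by (simp add: t_def add_nonneg_pos)
    have "t * \<bar>C\<bar> < A" using A unfolding t_def by (simp add: field_simps)
    then have "t^2 * \<bar>C\<bar> < t * A" using t by (simp add: power2_eq_square mult.assoc)
    moreover have "t^2 * C \<ge> - (t^2 * \<bar>C\<bar>)" using mult_left_mono[of "-\<bar>C\<bar>" C "t^2"] by simp
    moreover have "t * A > 0" using t A by simp
    ultimately have "2 * t * A + t^2 * C > 0" by linarith
    then show False using key[of t] by linarith
  qed
  define E where "E = {l. \<exists>u. u \<noteq> 0 \<and> H u = l *\<^sub>R u}"
  have lE: "l \<in> E" unfolding E_def using eig nu by (intro CollectI exI[of _ u]) auto
  define ev where "ev = (\<lambda>l. SOME u. u \<noteq> 0 \<and> H u = l *\<^sub>R u)"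
  have ev: "ev l \<noteq> 0 \<and> H (ev l) = l *\<^sub>R ev l" if "l \<in> E" for l
    using that unfolding E_def ev_def by (metis (mono_tags, lifting) mem_Collect_eq someI)
  have inj: "inj_on ev E"
  proof (rule inj_onI)
    fix l1 l2 assume "l1 \<in> E" "l2 \<in> E" "ev l1 = ev l2"
    then have "l1 *\<^sub>R ev l1 = l2 *\<^sub>R ev l1" "ev l1 \<noteq> 0" using ev by metis+
    then show "l1 = l2" by (simp add: scaleR_cancel_right)
  qed
  have orth: "pairwise orthogonal (ev ` E)"
  proof (rule pairwiseI)
    fix x y assume "x \<in> ev ` E" "y \<in> ev ` E" "x \<noteq> y"
    then obtain l1 l2 where l: "l1 \<in> E" "l2 \<in> E" "x = ev l1" "y = ev l2" "l1 \<noteq> l2" by blast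
    have "l1 * (x \<bullet> y) = H x \<bullet> y" using ev[OF l(1)] l(3) by simp
    also have "\<dots> = x \<bullet> H y" by (rule sym)
    also have "\<dots> = l2 * (x \<bullet> y)" using ev[OF l(2)] l(4) by simp
    finally have "(l1 - l2) * (x \<bullet> y) = 0" by (simp add: algebra_simps)
    then show "orthogonal x y" using l(5) by (simp add: orthogonal_def)
  qed
  have "0 \<notin> ev ` E" using ev by auto
  then have "independent (ev ` E)" using pairwise_orthogonal_independent orth by blast
  then have "finite (ev ` E)" using independent_bound by blast
  then have fin: "finite E" using finite_imageD inj by blast
  have "l \<le> lambda_max H" unfolding lambda_max_def E_def[symmetric] using fin lE by simp
  then have "l * (norm h)^2 \<le> lambda_max H * (norm h)^2" by (simp add: mult_right_mono)
  then show ?thesis using allh[of h] by linarith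
qed



definition rho :: "real \<Rightarrow> real \<Rightarrow> real" where
  "rho p d = (if p > 0 then d else if p < 0 then 0 else relu d)"

lemma relu_lin_ev: "eventually (\<lambda>s. relu (p + s * d) = relu p + s * rho p d) (at_right 0)"
proof (cases "p > 0")
  case True
  show ?thesis unfolding eventually_at_right_field
  proof (intro exI[of _ "p / (\<bar>d\<bar> + 1)"] conjI allI impI)
    show "p / (\<bar>d\<bar> + 1) > 0" using True by (simp add: add_nonneg_pos)
    fix s :: real assume s: "s > 0" "s < p / (\<bar>d\<bar> + 1)"
    have "s * (\<bar>d\<bar> + 1) < p" using s by (simp add: field_simps add_nonneg_pos)
    then have "s * \<bar>d\<bar> < p" using s by (simp add: algebra_simps)
    moreover have "- (s * \<bar>d\<bar>) \<le> s * d"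
      using mult_left_mono[of "- \<bar>d\<bar>" d s] s abs_ge_minus_self[of d] by simp
    ultimately have "p + s * d > 0" by linarith
    then show "relu (p + s * d) = relu p + s * rho p d" using True by (simp add: relu_def rho_def)
  qed
next
  case False
  show ?thesis
  proof (cases "p < 0")
    case True
    show ?thesis unfolding eventually_at_right_field
    proof (intro exI[of _ "- p / (\<bar>d\<bar> + 1)"] conjI allI impI)
      show "- p / (\<bar>d\<bar> + 1) > 0" using True by (intro divide_pos_pos) (auto intro: add_nonneg_pos)
      fix s :: real assume s: "s > 0" "s < - p / (\<bar>d\<bar> + 1)"
      have "s * (\<bar>d\<bar> + 1) < - p" using s by (simp add: field_simps add_nonneg_pos)
      then have "s * \<bar>d\<bar> < - p" using s by (simp add: algebra_simps)
      moreover have "s * d \<le> s * \<bar>d\<bar>" using s by (simp add: mult_left_mono)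
      ultimately have "p + s * d < 0" by linarith
      then show "relu (p + s * d) = relu p + s * rho p d" using True by (simp add: relu_def rho_def)
    qed
  next
    case False
    then have p0: "p = 0" using \<open>\<not> p > 0\<close> by simp
    show ?thesis unfolding eventually_at_right_field
    proof (intro exI[of _ 1] conjI allI impI)
      show "(1::real) > 0" by simp
      fix s :: real assume s: "s > 0" "s < 1"
      show "relu (p + s * d) = relu p + s * rho p d"
        using p0 s by (simp add: rho_def relu_def max_def mult_le_0_iff zero_le_mult_iff)
    qed
  qed
qed

definition Dn :: "('d::finite, 'k::finite) params \<Rightarrow> ('d, 'k) params \<Rightarrow> real^'d \<Rightarrow> real" where
  "Dn \<theta> h z = (case \<theta> of (W, B1, W2, b2) \<Rightarrow> case h of (HW, HB1, HW2, hb2) \<Rightarrow>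
     hb2 + (\<Sum>i\<in>UNIV. HW2 $ i * relu (z \<bullet> W $ i + B1 $ i)
        + W2 $ i * rho (z \<bullet> W $ i + B1 $ i) (z \<bullet> HW $ i + HB1 $ i)))"

definition En :: "('d::finite, 'k::finite) params \<Rightarrow> ('d, 'k) params \<Rightarrow> real^'d \<Rightarrow> real" where
  "En \<theta> h z = (case \<theta> of (W, B1, W2, b2) \<Rightarrow> case h of (HW, HB1, HW2, hb2) \<Rightarrow>
     (\<Sum>i\<in>UNIV. HW2 $ i * rho (z \<bullet> W $ i + B1 $ i) (z \<bullet> HW $ i + HB1 $ i)))"

lemma net_expand_ev:
  fixes \<theta> h :: "('d::finite, 'k::finite) params"
  shows "eventually (\<lambda>s. net (\<theta> + s *\<^sub>R h) z = net \<theta> z + s * Dn \<theta> h z + s^2 * En \<theta> h z) (at_right 0)"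
proof -
  obtain W B1 W2 b2 where th: "\<theta> = (W, B1, W2, b2)" by (cases \<theta>) auto
  obtain HW HB1 HW2 hb2 where hh: "h = (HW, HB1, HW2, hb2)" by (cases h) auto
  define p where "p = (\<lambda>i. z \<bullet> W $ i + B1 $ i)"
  define d where "d = (\<lambda>i. z \<bullet> HW $ i + HB1 $ i)"
  have ev: "eventually (\<lambda>s. \<forall>i. relu (p i + s * d i) = relu (p i) + s * rho (p i) (d i)) (at_right 0)"
    by (intro eventually_all_finite) (rule relu_lin_ev)
  show ?thesis
  proof (rule eventually_mono[OF ev])
    fix s assume A: "\<forall>i. relu (p i + s * d i) = relu (p i) + s * rho (p i) (d i)"
    have n1: "net (\<theta> + s *\<^sub>R h) z = (\<Sum>i\<in>UNIV. (W2 $ i + s * HW2 $ i) * relu (p i + s * d i)) + (b2 + s * hb2)"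
      unfolding th hh net_def p_def d_def by (simp add: inner_add_right algebra_simps)
    have "(\<Sum>i\<in>UNIV. (W2 $ i + s * HW2 $ i) * relu (p i + s * d i))
        = (\<Sum>i\<in>UNIV. W2 $ i * relu (p i) + s * (HW2 $ i * relu (p i) + W2 $ i * rho (p i) (d i))
              + s^2 * (HW2 $ i * rho (p i) (d i)))"
      by (rule sum.cong) (simp_all add: A algebra_simps power2_eq_square)
    also have "\<dots> = (\<Sum>i\<in>UNIV. W2 $ i * relu (p i)) + s * (\<Sum>i\<in>UNIV. HW2 $ i * relu (p i) + W2 $ i * rho (p i) (d i))
              + s^2 * (\<Sum>i\<in>UNIV. HW2 $ i * rho (p i) (d i))"
      by (simp add: sum.distrib sum_distrib_left[symmetric])
    finally show "net (\<theta> + s *\<^sub>R h) z = net \<theta> z + s * Dn \<theta> h z + s^2 * En \<theta> h z"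
      unfolding n1 unfolding th hh net_def Dn_def En_def p_def d_def
      by (simp add: algebra_simps inner_commute)
  qed
qed

lemma grad_zero_min:
  fixes F :: "'a::euclidean_space \<Rightarrow> real"
  assumes "F differentiable (at z)" "\<forall>w. F z \<le> F w"
  shows "grad F z = 0"
proof -
  have "(\<lambda>p. grad F z \<bullet> p) = (\<lambda>h. 0)"
    using has_derivative_local_min[OF grad_inner[OF assms(1)]] assms(2) by simp
  then have "grad F z \<bullet> grad F z = 0" by metis
  then show ?thesis by simp
qed

lemma taylor_tendsto:
  fixes F :: "'a::euclidean_space \<Rightarrow> real"
  assumes th: "twice_diff_hessian F z H" and g0: "grad F z = 0"
  shows "((\<lambda>s. (F (z + s *\<^sub>R h) - F z) / s^2) \<longlongrightarrow> (h \<bullet> H h) / 2) (at_right 0)"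
proof (rule tendstoI)
  fix e :: real assume e: "e > 0"
  obtain \<delta> where d: "\<delta> > 0" "\<forall>s. 0 < s \<and> s < \<delta> \<longrightarrow>
           \<bar>F (z + s *\<^sub>R h) - F z - s^2 / 2 * (h \<bullet> H h)\<bar> \<le> (e/2) * s^2"
    using hess_taylor_eps[OF th g0 half_gt_zero[OF e]] by blast
  show "eventually (\<lambda>s. dist ((F (z + s *\<^sub>R h) - F z) / s^2) ((h \<bullet> H h) / 2) < e) (at_right 0)"
    unfolding eventually_at_right_field
  proof (intro exI[of _ \<delta>] conjI allI impI)
    show "\<delta> > (0::real)" by fact
    fix s :: real assume s: "s > 0" "s < \<delta>"
    have b: "\<bar>F (z + s *\<^sub>R h) - F z - s^2 / 2 * (h \<bullet> H h)\<bar> \<le> (e/2) * s^2" using d s by blast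
    have s2: "s^2 > 0" using s by simp
    define A where "A = F (z + s *\<^sub>R h) - F z - s^2 / 2 * (h \<bullet> H h)"
    have eqA: "F (z + s *\<^sub>R h) - F z = A + s^2 / 2 * (h \<bullet> H h)" unfolding A_def by simp
    have "(F (z + s *\<^sub>R h) - F z) / s^2 = A / s^2 + (s^2 / 2 * (h \<bullet> H h)) / s^2"
      unfolding eqA by (rule add_divide_distrib)
    also have "(s^2 / 2 * (h \<bullet> H h)) / s^2 = (h \<bullet> H h) / 2" using s2 by simp
    finally have e1: "(F (z + s *\<^sub>R h) - F z) / s^2 - (h \<bullet> H h) / 2 = A / s^2" by simp
    have "\<bar>A\<bar> \<le> (e/2) * s^2" using b unfolding A_def .
    then have "\<bar>A\<bar> / s^2 \<le> e/2" using s2 by (simp only: pos_divide_le_eq)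
    moreover have "\<bar>A / s^2\<bar> = \<bar>A\<bar> / s^2" using s2 by (simp only: abs_divide abs_of_pos)
    ultimately have "\<bar>(F (z + s *\<^sub>R h) - F z) / s^2 - (h \<bullet> H h) / 2\<bar> \<le> e / 2"
      unfolding e1 by simp
    then show "dist ((F (z + s *\<^sub>R h) - F z) / s^2) ((h \<bullet> H h) / 2) < e"
      using e by (simp add: dist_real_def)
  qed
qed

lemma Q_formula:
  fixes n :: nat and x :: "nat \<Rightarrow> real^'d::finite" and y :: "nat \<Rightarrow> real"
    and \<theta> :: "('d, 'k::finite) params" and H :: "('d, 'k) params \<Rightarrow> ('d, 'k) params"
  assumes n: "n > 0"
    and min: "\<forall>\<theta>' :: ('d, 'k) params. loss n x y \<theta> \<le> loss n x y \<theta>'"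
    and hess: "twice_diff_hessian (loss n x y) \<theta> H"
    and interp: "\<forall>j<n. net \<theta> (x j) = y j"
  shows "h \<bullet> H h = (1 / real n) * (\<Sum>j<n. (Dn \<theta> h (x j))^2)"
proof -
  let ?F = "loss n x y"
  have diff: "?F differentiable (at \<theta>)"
    using hess unfolding twice_diff_hessian_def by blast
  have g0: "grad ?F \<theta> = 0" using grad_zero_min[OF diff] min by blast
  note T1 = taylor_tendsto[OF hess g0, of h]
  have F0: "?F \<theta> = 0" unfolding loss_def using interp by simp
  have ev: "eventually (\<lambda>s. \<forall>j\<in>{..<n}. net (\<theta> + s *\<^sub>R h) (x j) = net \<theta> (x j) + s * Dn \<theta> h (x j) + s^2 * En \<theta> h (x j)) (at_right 0)"
    by (rule eventually_ball_finite) (auto intro: net_expand_ev)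
  have ev2: "eventually (\<lambda>s. (?F (\<theta> + s *\<^sub>R h) - ?F \<theta>) / s^2
       = (1 / (2 * real n)) * (\<Sum>j<n. (Dn \<theta> h (x j) + s * En \<theta> h (x j))^2)) (at_right 0)"
    using ev eventually_at_right_less[of "0::real"]
  proof eventually_elim
    case (elim s)
    have sp: "s > 0" using elim by simp
    have per: "net (\<theta> + s *\<^sub>R h) (x j) - y j = s * (Dn \<theta> h (x j) + s * En \<theta> h (x j))"
      if "j < n" for j
    proof -
      have "net (\<theta> + s *\<^sub>R h) (x j) = net \<theta> (x j) + s * Dn \<theta> h (x j) + s^2 * En \<theta> h (x j)"
        using elim(1) that by blast
      moreover have "net \<theta> (x j) = y j" using interp that by blast
      ultimately show ?thesis by (simp add: power2_eq_square distrib_left)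
    qed
    have "(\<Sum>j<n. (net (\<theta> + s *\<^sub>R h) (x j) - y j)^2) = (\<Sum>j<n. (s * (Dn \<theta> h (x j) + s * En \<theta> h (x j)))^2)"
      by (rule sum.cong) (simp_all add: per)
    then have "?F (\<theta> + s *\<^sub>R h) = (1 / (2 * real n)) * (\<Sum>j<n. (s * (Dn \<theta> h (x j) + s * En \<theta> h (x j)))^2)"
      unfolding loss_def by (simp only:)
    also have "\<dots> = (1 / (2 * real n)) * (s^2 * (\<Sum>j<n. (Dn \<theta> h (x j) + s * En \<theta> h (x j))^2))"
      by (simp only: power_mult_distrib sum_distrib_left)
    also have "\<dots> = s^2 * ((1 / (2 * real n)) * (\<Sum>j<n. (Dn \<theta> h (x j) + s * En \<theta> h (x j))^2))"
      by (simp only: mult.left_commute)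
    finally have "?F (\<theta> + s *\<^sub>R h) = s^2 * ((1 / (2 * real n)) * (\<Sum>j<n. (Dn \<theta> h (x j) + s * En \<theta> h (x j))^2))" .
    then show ?case using F0 sp by (simp only: diff_zero) simp
  qed
  have T2: "((\<lambda>s. (1 / (2 * real n)) * (\<Sum>j<n. (Dn \<theta> h (x j) + s * En \<theta> h (x j))^2))
      \<longlongrightarrow> (1 / (2 * real n)) * (\<Sum>j<n. (Dn \<theta> h (x j) + 0 * En \<theta> h (x j))^2)) (at_right 0)"
    by (intro tendsto_intros)
  have T1': "((\<lambda>s. (1 / (2 * real n)) * (\<Sum>j<n. (Dn \<theta> h (x j) + s * En \<theta> h (x j))^2))
      \<longlongrightarrow> (h \<bullet> H h) / 2) (at_right 0)"
    using Lim_transform_eventually[OF T1 ev2] .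
  have "(h \<bullet> H h) / 2 = (1 / (2 * real n)) * (\<Sum>j<n. (Dn \<theta> h (x j) + 0 * En \<theta> h (x j))^2)"
    using tendsto_unique[OF _ T1' T2] by simp
  then show ?thesis by simp
qed



lemma relu_pos_scale: "s > 0 \<Longrightarrow> relu (k * s) = s * relu k"
  unfolding relu_def by (cases "k \<ge> 0") (auto simp: max_def mult_le_0_iff zero_le_mult_iff)

lemma relu_shift: "\<bar>b\<bar> < \<bar>a\<bar> \<Longrightarrow> relu (a + b) = relu a + (if a > 0 then b else 0)"
  unfolding relu_def by auto

lemma relu_abs: "relu k + relu (- k) = \<bar>k\<bar>"
  unfolding relu_def by auto

lemma relu_1d_jump:
  fixes L :: "'l set" and c k r :: "'l \<Rightarrow> real"
  assumes fin: "finite L" and kne: "\<forall>l\<in>L. k l \<noteq> 0"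
    and zero: "\<forall>x. (\<Sum>l\<in>L. c l * relu (k l * (x - r l))) + \<alpha> * x + \<beta> = 0"
  shows "(\<Sum>l\<in>{l\<in>L. r l = x0}. c l * \<bar>k l\<bar>) = 0"
proof -
  define L0 where "L0 = {l\<in>L. r l = x0}"
  define L1 where "L1 = L - L0"
  have fin0: "finite L0" "finite L1" using fin by (auto simp: L0_def L1_def)
  have LU: "L = L0 \<union> L1" "L0 \<inter> L1 = {}" by (auto simp: L0_def L1_def)
  define d where "d = (if L1 = {} then 1 else Min ((\<lambda>l. \<bar>x0 - r l\<bar>) ` L1))"
  have dpos: "d > 0"
  proof (cases "L1 = {}")
    case True then show ?thesis by (simp add: d_def)
  next
    case False
    have "\<forall>y\<in>(\<lambda>l. \<bar>x0 - r l\<bar>) ` L1. y > 0" by (auto simp: L1_def L0_def)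
    then show ?thesis using False fin0 by (simp add: d_def)
  qed
  have dle: "d \<le> \<bar>x0 - r l\<bar>" if "l \<in> L1" for l
    using that fin0 by (auto simp: d_def intro!: Min_le)
  define f where "f = (\<lambda>x. \<Sum>l\<in>L. c l * relu (k l * (x - r l)))"
  have fx: "f x = - \<alpha> * x - \<beta>" for x using zero[rule_format, of x] unfolding f_def by linarith
  define R where "R = (\<Sum>l\<in>L1. c l * (if k l * (x0 - r l) > 0 then k l else 0))"
  have step: "f (x0 + s) - f x0 = (\<Sum>l\<in>L0. c l * relu (k l * s)) + s * R" if "\<bar>s\<bar> < d" for s
  proof -
    have t1: "c l * relu (k l * (x0 + s - r l)) - c l * relu (k l * (x0 - r l))
        = s * (c l * (if k l * (x0 - r l) > 0 then k l else 0))" if "l \<in> L1" for l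
    proof -
      have kl: "k l \<noteq> 0" using kne that LU by auto
      have "\<bar>k l * s\<bar> < \<bar>k l * (x0 - r l)\<bar>"
        using dle[OF that] \<open>\<bar>s\<bar> < d\<close> kl by (simp add: abs_mult)
      then have "relu (k l * (x0 - r l) + k l * s) = relu (k l * (x0 - r l))
          + (if k l * (x0 - r l) > 0 then k l * s else 0)" by (rule relu_shift)
      moreover have "k l * (x0 + s - r l) = k l * (x0 - r l) + k l * s" by (simp add: algebra_simps)
      ultimately show ?thesis by (simp add: algebra_simps)
    qed
    have t0: "c l * relu (k l * (x0 + s - r l)) - c l * relu (k l * (x0 - r l))
        = c l * relu (k l * s)" if "l \<in> L0" for l
      using that by (simp add: L0_def relu_def)
    have "f (x0 + s) - f x0 = (\<Sum>l\<in>L. c l * relu (k l * (x0 + s - r l)) - c l * relu (k l * (x0 - r l)))"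
      unfolding f_def by (simp add: sum_subtractf)
    also have "\<dots> = (\<Sum>l\<in>L0. c l * relu (k l * (x0 + s - r l)) - c l * relu (k l * (x0 - r l)))
        + (\<Sum>l\<in>L1. c l * relu (k l * (x0 + s - r l)) - c l * relu (k l * (x0 - r l)))"
      unfolding LU(1) by (rule sum.union_disjoint) (use fin0 LU in auto)
    also have "\<dots> = (\<Sum>l\<in>L0. c l * relu (k l * s)) + s * R"
      unfolding R_def sum_distrib_left using t0 t1 by simp
    finally show ?thesis .
  qed
  define P where "P = (\<Sum>l\<in>L0. c l * relu (k l))"
  define N where "N = (\<Sum>l\<in>L0. c l * relu (- k l))"
  define s where "s = d / 2"
  have s: "s > 0" "\<bar>s\<bar> < d" "\<bar>-s\<bar> < d" using dpos by (auto simp: s_def)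
  have e1: "(\<Sum>l\<in>L0. c l * relu (k l * s)) = s * P"
    unfolding P_def sum_distrib_left by (rule sum.cong) (simp_all add: relu_pos_scale[OF s(1)])
  have e2: "(\<Sum>l\<in>L0. c l * relu (k l * (- s))) = s * N"
  proof -
    have "relu (k l * (- s)) = s * relu (- k l)" for l
      using relu_pos_scale[OF s(1), of "- k l"] by simp
    then show ?thesis unfolding N_def sum_distrib_left by (simp add: algebra_simps)
  qed
  have "s * P + s * R = - \<alpha> * s" using step[OF s(2)] e1 fx[of "x0 + s"] fx[of x0]
    by (simp add: algebra_simps)
  then have "(P + R + \<alpha>) * s = 0" by (simp add: algebra_simps)
  then have A: "P + R = - \<alpha>" using s(1) by simp
  have "s * N - s * R = \<alpha> * s" using step[OF s(3)] e2 fx[of "x0 + - s"] fx[of x0]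
    by (simp add: algebra_simps)
  then have "(N - R - \<alpha>) * s = 0" by (simp add: algebra_simps)
  then have B: "N - R = \<alpha>" using s(1) by simp
  have "P + N = 0" using A B by simp
  moreover have "P + N = (\<Sum>l\<in>L0. c l * \<bar>k l\<bar>)"
    unfolding P_def N_def sum.distrib[symmetric] by (simp add: relu_abs[symmetric] algebra_simps)
  ultimately show ?thesis unfolding L0_def by simp
qed

lemma relu_repr_unique:
  fixes L :: "'l set" and c t :: "'l \<Rightarrow> real" and u :: "'l \<Rightarrow> 'a::euclidean_space" and q :: 'a
  assumes fin: "finite L" and unit: "\<forall>l\<in>L. norm (u l) = 1"
    and zero: "\<forall>z. (\<Sum>l\<in>L. c l * relu (u l \<bullet> z - t l)) + q \<bullet> z + c0 = 0"
  shows "(\<Sum>l\<in>{l\<in>L. (u l = u0 \<and> t l = t0) \<or> (u l = - u0 \<and> t l = - t0)}. c l) = 0"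
proof (cases "{l\<in>L. (u l = u0 \<and> t l = t0) \<or> (u l = - u0 \<and> t l = - t0)} = {}")
  case True then show ?thesis by (simp only: sum.empty)
next
  case False
  then obtain l0 where l0: "l0 \<in> L" "(u l0 = u0 \<and> t l0 = t0) \<or> (u l0 = - u0 \<and> t l0 = - t0)" by blast
  define eqv where "eqv = (\<lambda>l l'. (u l = u l' \<and> t l = t l') \<or> (u l = - u l' \<and> t l = - t l'))"
  have cls: "{l\<in>L. (u l = u0 \<and> t l = t0) \<or> (u l = - u0 \<and> t l = - t0)} = {l\<in>L. eqv l l0}"
    using l0(2) unfolding eqv_def by auto
  have une: "u l \<noteq> 0" if "l \<in> L" for l using unit that by auto
  have "negligible (\<Union>((\<lambda>l. {w. u l \<bullet> w = 0}) ` L))"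
    using fin une by (intro negligible_Union) (auto intro!: negligible_hyperplane)
  then have "\<Union>((\<lambda>l. {w. u l \<bullet> w = 0}) ` L) \<noteq> UNIV" using non_negligible_UNIV by metis
  then obtain w where w: "\<forall>l\<in>L. u l \<bullet> w \<noteq> 0" by blast
  define kk where "kk = (\<lambda>l. u l \<bullet> w)"
  have kk: "kk l \<noteq> 0" if "l \<in> L" for l using w that by (simp add: kk_def)
  define rr where "rr = (\<lambda>p l. (t l - u l \<bullet> p) / kk l)"
  have key: "eqv l l'" if l: "l \<in> L" "l' \<in> L"
     and a: "(1 / kk l') *\<^sub>R u l' - (1 / kk l) *\<^sub>R u l = 0" and b: "t l' / kk l' - t l / kk l = 0" for l l'
  proof -
    define \<mu> where "\<mu> = kk l' / kk l"
    have k1: "kk l \<noteq> 0" "kk l' \<noteq> 0" using kk l by auto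
    have ul: "u l' = \<mu> *\<^sub>R u l"
    proof -
      have "(1 / kk l') *\<^sub>R u l' = (1 / kk l) *\<^sub>R u l" using a by simp
      then have "kk l' *\<^sub>R ((1 / kk l') *\<^sub>R u l') = kk l' *\<^sub>R ((1 / kk l) *\<^sub>R u l)" by simp
      then show ?thesis using k1 by (simp add: \<mu>_def)
    qed
    have tl: "t l' = \<mu> * t l"
    proof -
      have "t l' / kk l' = t l / kk l" using b by simp
      then show ?thesis using k1 by (simp add: \<mu>_def field_simps)
    qed
    have "norm (u l') = \<bar>\<mu>\<bar> * norm (u l)" using ul by simp
    then have "\<bar>\<mu>\<bar> = 1" using unit l by simp
    then have "\<mu> = 1 \<or> \<mu> = -1" by linarith
    then show ?thesis
    proof
      assume "\<mu> = 1" then show ?thesis using ul tl unfolding eqv_def by simp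
    next
      assume "\<mu> = -1" then show ?thesis using ul tl unfolding eqv_def by simp
    qed
  qed
  define PP where "PP = {(l, l'). l \<in> L \<and> l' \<in> L \<and> \<not> eqv l l'}"
  have "PP \<subseteq> L \<times> L" by (auto simp: PP_def)
  then have finPP: "finite PP" using fin finite_subset by blast
  define BS where "BS = (\<lambda>(l, l'). {p. ((1 / kk l') *\<^sub>R u l' - (1 / kk l) *\<^sub>R u l) \<bullet> p
                                       = t l' / kk l' - t l / kk l})"
  have "negligible (\<Union>(BS ` PP))"
  proof (intro negligible_Union)
    show "finite (BS ` PP)" using finPP by simp
  next
    fix T assume "T \<in> BS ` PP"
    then obtain l l' where ll: "(l, l') \<in> PP" "T = BS (l, l')" by auto
    have "(1 / kk l') *\<^sub>R u l' - (1 / kk l) *\<^sub>R u l \<noteq> 0 \<or> t l' / kk l' - t l / kk l \<noteq> 0"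
      using key[of l l'] ll(1) unfolding PP_def by auto
    then show "negligible T" unfolding ll(2) BS_def by (simp add: negligible_hyperplane)
  qed
  then have "\<Union>(BS ` PP) \<noteq> UNIV" using non_negligible_UNIV by metis
  then obtain p where p: "p \<notin> \<Union>(BS ` PP)" by blast
  have rrne: "rr p l \<noteq> rr p l'" if "l \<in> L" "l' \<in> L" "\<not> eqv l l'" for l l'
  proof
    assume eq: "rr p l = rr p l'"
    have "(l, l') \<in> PP" using that by (simp add: PP_def)
    then have nb: "p \<notin> BS (l, l')" using p by blast
    have "((1 / kk l') *\<^sub>R u l' - (1 / kk l) *\<^sub>R u l) \<bullet> p = t l' / kk l' - t l / kk l"
      using eq unfolding rr_def by (simp add: inner_diff_left diff_divide_distrib)
    then show False using nb by (simp add: BS_def)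
  qed
  have line: "\<forall>x. (\<Sum>l\<in>L. c l * relu (kk l * (x - rr p l))) + (q \<bullet> w) * x + (q \<bullet> p + c0) = 0"
  proof
    fix x
    have "(\<Sum>l\<in>L. c l * relu (u l \<bullet> (p + x *\<^sub>R w) - t l)) + q \<bullet> (p + x *\<^sub>R w) + c0 = 0"
      using zero by blast
    moreover have eq: "u l \<bullet> (p + x *\<^sub>R w) - t l = kk l * (x - rr p l)" if "l \<in> L" for l
      using kk[OF that] unfolding rr_def kk_def by (simp add: inner_add_right field_simps)
    moreover have "(\<Sum>l\<in>L. c l * relu (kk l * (x - rr p l))) = (\<Sum>l\<in>L. c l * relu (u l \<bullet> (p + x *\<^sub>R w) - t l))"
      by (rule sum.cong) (use eq in auto)
    moreover have "q \<bullet> (p + x *\<^sub>R w) = q \<bullet> p + x * (q \<bullet> w)" by (simp add: inner_add_right)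
    ultimately show "(\<Sum>l\<in>L. c l * relu (kk l * (x - rr p l))) + (q \<bullet> w) * x + (q \<bullet> p + c0) = 0"
      by (simp only:) (simp add: algebra_simps)
  qed
  have J: "(\<Sum>l\<in>{l\<in>L. rr p l = rr p l0}. c l * \<bar>kk l\<bar>) = 0"
    by (rule relu_1d_jump[OF fin _ line]) (use kk in blast)
  have seteq: "{l\<in>L. rr p l = rr p l0} = {l\<in>L. eqv l l0}"
  proof (intro set_eqI iffI)
    fix l assume "l \<in> {l\<in>L. rr p l = rr p l0}"
    then show "l \<in> {l\<in>L. eqv l l0}" using rrne l0(1) by blast
  next
    fix l assume a: "l \<in> {l\<in>L. eqv l l0}"
    then have "(u l = u l0 \<and> t l = t l0) \<or> (u l = - u l0 \<and> t l = - t l0)" by (simp add: eqv_def)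
    then have "rr p l = rr p l0"
    proof
      assume "u l = u l0 \<and> t l = t l0" then show ?thesis by (simp add: rr_def kk_def)
    next
      assume h: "u l = - u l0 \<and> t l = - t l0"
      have "rr p l = (- (t l0 - u l0 \<bullet> p)) / (- (u l0 \<bullet> w))"
        unfolding rr_def kk_def using h by simp
      also have "\<dots> = rr p l0" unfolding rr_def kk_def by (rule minus_divide_divide)
      finally show ?thesis .
    qed
    then show "l \<in> {l\<in>L. rr p l = rr p l0}" using a by simp
  qed
  have absk: "\<bar>kk l\<bar> = \<bar>kk l0\<bar>" if "eqv l l0" for l
  proof -
    have "u l = u l0 \<or> u l = - u l0" using that unfolding eqv_def by blast
    then show ?thesis
    proof
      assume "u l = u l0" then show ?thesis by (simp add: kk_def)
    next
      assume "u l = - u l0" then have "kk l = - kk l0" by (simp add: kk_def)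
      then show ?thesis by simp
    qed
  qed
  have "(\<Sum>l\<in>{l\<in>L. eqv l l0}. c l * \<bar>kk l0\<bar>) = (\<Sum>l\<in>{l\<in>L. eqv l l0}. c l * \<bar>kk l\<bar>)"
    by (rule sum.cong) (simp_all add: absk)
  then have "(\<Sum>l\<in>{l\<in>L. eqv l l0}. c l * \<bar>kk l0\<bar>) = 0"
    using J unfolding seteq by simp
  then have "(\<Sum>l\<in>{l\<in>L. eqv l l0}. c l) * \<bar>kk l0\<bar> = 0" by (simp add: sum_distrib_right)
  then show ?thesis unfolding cls using kk[OF l0(1)] by simp
qed



lemma radon_bound:
  fixes g :: "real^'d::finite \<Rightarrow> real \<Rightarrow> real" and K :: "'k set"
    and v' :: "'k \<Rightarrow> real^'d" and t' a' :: "'k \<Rightarrow> real"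
  assumes gnn: "\<And>u s. g u s \<ge> 0" and geven: "\<And>u s. g (- u) (- s) = g u s"
    and finK: "finite K" and unitK: "\<forall>k\<in>K. norm (v' k) = 1"
    and same: "\<And>p. (\<Sum>i\<in>{i. i < m \<and> ((v i, b i) = p \<or> (v i, b i) = (- fst p, - snd p))}. a i)
       = (\<Sum>k\<in>{k\<in>K. (v' k, t' k) = p \<or> (v' k, t' k) = (- fst p, - snd p)}. a' k)"
  shows "radon_norm g m a v b \<le> (\<Sum>k\<in>K. \<bar>a' k\<bar> * g (v' k) (t' k))"
proof -
  define P1 where "P1 = radon_support m v b"
  define P2 where "P2 = (\<lambda>k. (v' k, t' k)) ` K \<union> (\<lambda>k. (- v' k, - t' k)) ` K"
  define R where "R = (\<lambda>p k. (v' k, t' k) = p \<or> (v' k, t' k) = (- fst p, - snd p))"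
  define A2 where "A2 = (\<lambda>p. (\<Sum>k\<in>{k\<in>K. R p k}. a' k))"
  define G where "G = (\<lambda>p. g (fst p) (snd p))"
  have fin1: "finite P1" unfolding P1_def radon_support_def by simp
  have fin2: "finite P2" unfolding P2_def using finK by simp
  have atoms: "radon_atoms m a v b p = A2 p / 2" for p
    unfolding radon_atoms_def A2_def R_def using same[of p] by simp
  have "radon_norm g m a v b = (\<Sum>p\<in>P1. \<bar>A2 p / 2\<bar> * G p)"
    unfolding radon_norm_def P1_def G_def by (simp only: atoms)
  also have "\<dots> = (\<Sum>p\<in>P1 \<inter> P2. \<bar>A2 p / 2\<bar> * G p)"
  proof (rule sum.mono_neutral_right[OF fin1])
    show "P1 \<inter> P2 \<subseteq> P1" by blast
    show "\<forall>p\<in>P1 - P1 \<inter> P2. \<bar>A2 p / 2\<bar> * G p = 0"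
    proof
      fix p assume "p \<in> P1 - P1 \<inter> P2"
      then have "p \<notin> P2" by blast
      then have "{k\<in>K. R p k} = {}" unfolding P2_def R_def by (force simp: prod_eq_iff)
      then show "\<bar>A2 p / 2\<bar> * G p = 0" unfolding A2_def by (simp only: sum.empty)
    qed
  qed
  also have "\<dots> \<le> (\<Sum>p\<in>P2. \<bar>A2 p / 2\<bar> * G p)"
    by (rule sum_mono2[OF fin2]) (auto simp: G_def gnn)
  also have "\<dots> \<le> (\<Sum>p\<in>P2. (\<Sum>k\<in>{k\<in>K. R p k}. \<bar>a' k\<bar> * G p / 2))"
  proof (rule sum_mono)
    fix p assume "p \<in> P2"
    have "\<bar>A2 p\<bar> \<le> (\<Sum>k\<in>{k\<in>K. R p k}. \<bar>a' k\<bar>)" unfolding A2_def by (rule sum_abs)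
    then have "\<bar>A2 p\<bar> * G p \<le> (\<Sum>k\<in>{k\<in>K. R p k}. \<bar>a' k\<bar>) * G p"
      by (rule mult_right_mono) (simp add: G_def gnn)
    then show "\<bar>A2 p / 2\<bar> * G p \<le> (\<Sum>k\<in>{k\<in>K. R p k}. \<bar>a' k\<bar> * G p / 2)"
      by (simp add: sum_distrib_right sum_divide_distrib[symmetric])
  qed
  also have "\<dots> = (\<Sum>k\<in>K. (\<Sum>p\<in>{p\<in>P2. R p k}. \<bar>a' k\<bar> * G p / 2))"
    by (rule sum.swap_restrict[OF fin2 finK])
  also have "\<dots> = (\<Sum>k\<in>K. \<bar>a' k\<bar> * g (v' k) (t' k))"
  proof (rule sum.cong[OF refl])
    fix k assume k: "k \<in> K"
    have ne: "(v' k, t' k) \<noteq> (- v' k, - t' k)"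
    proof
      assume "(v' k, t' k) = (- v' k, - t' k)"
      then have "v' k = - v' k" by simp
      then have "(2::real) *\<^sub>R v' k = 0" by (simp add: scaleR_2 eq_neg_iff_add_eq_0)
      then have "v' k = 0" by simp
      then show False using unitK k by (metis norm_zero zero_neq_one)
    qed
    have set: "{p\<in>P2. R p k} = {(v' k, t' k), (- v' k, - t' k)}"
      using k unfolding P2_def R_def by (auto simp: prod_eq_iff)
    show "(\<Sum>p\<in>{p\<in>P2. R p k}. \<bar>a' k\<bar> * G p / 2) = \<bar>a' k\<bar> * g (v' k) (t' k)"
      unfolding set using ne by (simp add: G_def geven field_simps)
  qed
  finally show ?thesis .
qed

lemma same_atoms:
  fixes a :: "nat \<Rightarrow> real" and v :: "nat \<Rightarrow> real^'d::finite" and b :: "nat \<Rightarrow> real"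
    and K :: "'k set" and a' t' :: "'k \<Rightarrow> real" and v' :: "'k \<Rightarrow> real^'d" and q :: "real^'d"
  assumes finK: "finite K" and unit: "\<forall>i<m. norm (v i) = 1" and unitK: "\<forall>k\<in>K. norm (v' k) = 1"
    and eq: "\<forall>z. (\<Sum>i<m. a i * relu (v i \<bullet> z - b i)) + q \<bullet> z + c0 = (\<Sum>k\<in>K. a' k * relu (v' k \<bullet> z - t' k))"
  shows "(\<Sum>i\<in>{i. i < m \<and> ((v i, b i) = p \<or> (v i, b i) = (- fst p, - snd p))}. a i)
       = (\<Sum>k\<in>{k\<in>K. (v' k, t' k) = p \<or> (v' k, t' k) = (- fst p, - snd p)}. a' k)"
proof -
  define L :: "(nat + 'k) set" where "L = Inl ` {..<m} \<union> Inr ` K"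
  define cc where "cc = case_sum a (\<lambda>k. - a' k)"
  define uu where "uu = case_sum v v'"
  define tt where "tt = case_sum b t'"
  have finL: "finite L" using finK by (simp add: L_def)
  have unitL: "\<forall>l\<in>L. norm (uu l) = 1" using unit unitK by (auto simp: L_def uu_def)
  have disj: "Inl ` A \<inter> Inr ` B = {}" for A :: "nat set" and B :: "'k set" by auto
  have split: "(\<Sum>l\<in>Inl ` A \<union> Inr ` B. f l) = (\<Sum>i\<in>A. f (Inl i)) + (\<Sum>k\<in>B. f (Inr k))"
    if "finite A" "finite B" for A :: "nat set" and B :: "'k set" and f :: "nat + 'k \<Rightarrow> real"
  proof -
    have "(\<Sum>l\<in>Inl ` A \<union> Inr ` B. f l) = (\<Sum>l\<in>Inl ` A. f l) + (\<Sum>l\<in>Inr ` B. f l)"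
      by (rule sum.union_disjoint) (use that disj in auto)
    also have "\<dots> = (\<Sum>i\<in>A. f (Inl i)) + (\<Sum>k\<in>B. f (Inr k))"
      by (simp add: sum.reindex)
    finally show ?thesis .
  qed
  have zero: "\<forall>z. (\<Sum>l\<in>L. cc l * relu (uu l \<bullet> z - tt l)) + q \<bullet> z + c0 = 0"
  proof
    fix z
    have "(\<Sum>l\<in>L. cc l * relu (uu l \<bullet> z - tt l))
        = (\<Sum>i<m. a i * relu (v i \<bullet> z - b i)) - (\<Sum>k\<in>K. a' k * relu (v' k \<bullet> z - t' k))"
      unfolding L_def using finK by (simp add: split cc_def uu_def tt_def sum_negf)
    then show "(\<Sum>l\<in>L. cc l * relu (uu l \<bullet> z - tt l)) + q \<bullet> z + c0 = 0"
      using eq[rule_format, of z] by linarith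
  qed
  note U = relu_repr_unique[OF finL unitL zero, of "fst p" "snd p"]
  have set: "{l\<in>L. (uu l = fst p \<and> tt l = snd p) \<or> (uu l = - fst p \<and> tt l = - snd p)}
      = Inl ` {i. i < m \<and> ((v i, b i) = p \<or> (v i, b i) = (- fst p, - snd p))}
        \<union> Inr ` {k\<in>K. (v' k, t' k) = p \<or> (v' k, t' k) = (- fst p, - snd p)}"
    unfolding L_def uu_def tt_def by (auto simp: prod_eq_iff)
  have "0 = (\<Sum>i\<in>{i. i < m \<and> ((v i, b i) = p \<or> (v i, b i) = (- fst p, - snd p))}. a i)
       - (\<Sum>k\<in>{k\<in>K. (v' k, t' k) = p \<or> (v' k, t' k) = (- fst p, - snd p)}. a' k)"
    using U unfolding set using finK by (simp add: split cc_def sum_negf)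
  then show ?thesis by simp
qed



lemma rho_zero: "rho p 0 = 0" by (simp add: rho_def relu_def)

lemma Dn_basis:
  fixes W :: "(real^'d::finite)^'k::finite" and B1 W2 :: "real^'k" and b2 c :: real
  shows "Dn (W, B1, W2, b2) (0, (\<chi> k. if k = i then c else 0), 0, 0) z = W2 $ i * rho (z \<bullet> W $ i + B1 $ i) c"
proof -
  have "Dn (W, B1, W2, b2) (0, (\<chi> k. if k = i then c else 0), 0, 0) z
      = (\<Sum>k\<in>UNIV. W2 $ k * rho (z \<bullet> W $ k + B1 $ k) (if k = i then c else 0))"
    unfolding Dn_def by simp
  also have "\<dots> = (\<Sum>k\<in>UNIV. if k = i then W2 $ i * rho (z \<bullet> W $ i + B1 $ i) c else 0)"
    by (rule sum.cong) (auto simp: rho_zero)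
  also have "\<dots> = W2 $ i * rho (z \<bullet> W $ i + B1 $ i) c" by simp
  finally show ?thesis .
qed

lemma boundary:
  fixes \<theta> :: "('d::finite, 'k::finite) params" and H :: "('d, 'k) params \<Rightarrow> ('d, 'k) params"
    and x :: "nat \<Rightarrow> real^'d"
  assumes n: "n > 0" and lin: "linear H"
    and QF: "\<And>h. h \<bullet> H h = (1 / real n) * (\<Sum>j<n. (Dn \<theta> h (x j))^2)"
    and th: "\<theta> = (W, B1, W2, b2)" and w2: "W2 $ i \<noteq> 0" and j: "j < n"
  shows "x j \<bullet> W $ i + B1 $ i \<noteq> 0"
proof
  assume p0: "x j \<bullet> W $ i + B1 $ i = 0"
  define e where "e = (\<lambda>c::real. ((0::(real^'d)^'k), (\<chi> k. if k = i then c else 0)::real^'k, (0::real^'k), (0::real)))"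
  have em: "e (-1) = - e 1" unfolding e_def by (simp add: vec_eq_iff)
  have "e (-1) \<bullet> H (e (-1)) = e 1 \<bullet> H (e 1)" unfolding em using lin by (simp add: linear_neg)
  then have "(1 / real n) * (\<Sum>j<n. (Dn \<theta> (e (-1)) (x j))^2) = (1 / real n) * (\<Sum>j<n. (Dn \<theta> (e 1) (x j))^2)"
    using QF by metis
  then have eqs: "(\<Sum>j<n. (W2 $ i * rho (x j \<bullet> W $ i + B1 $ i) (-1))^2)
      = (\<Sum>j<n. (W2 $ i * rho (x j \<bullet> W $ i + B1 $ i) 1)^2)"
    using n unfolding th e_def Dn_basis by simp
  have "(\<Sum>j<n. (W2 $ i * rho (x j \<bullet> W $ i + B1 $ i) (-1))^2)
      < (\<Sum>j<n. (W2 $ i * rho (x j \<bullet> W $ i + B1 $ i) 1)^2)"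
  proof (rule sum_strict_mono_ex1)
    show "finite {..<n}" by simp
    show "\<forall>j\<in>{..<n}. (W2 $ i * rho (x j \<bullet> W $ i + B1 $ i) (-1))^2 \<le> (W2 $ i * rho (x j \<bullet> W $ i + B1 $ i) 1)^2"
      by (auto simp: rho_def relu_def power_mult_distrib)
    show "\<exists>j\<in>{..<n}. (W2 $ i * rho (x j \<bullet> W $ i + B1 $ i) (-1))^2 < (W2 $ i * rho (x j \<bullet> W $ i + B1 $ i) 1)^2"
      using j p0 w2 by (intro bexI[of _ j]) (auto simp: rho_def relu_def)
  qed
  then show False using eqs by simp
qed

lemma Dn_simpl:
  fixes Wa :: "(real^'d::finite)^'k::finite" and Ba Wb :: "real^'k" and bb :: real
  assumes bnd: "\<And>i. Wb $ i \<noteq> 0 \<Longrightarrow> z \<bullet> Wa $ i + Ba $ i \<noteq> 0"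
  shows "Dn (Wa, Ba, Wb, bb) (Ha, Hb, Hc, hq) z = hq + (\<Sum>i\<in>UNIV. Hc $ i * relu (z \<bullet> Wa $ i + Ba $ i)
        + Wb $ i * (if z \<bullet> Wa $ i + Ba $ i > 0 then z \<bullet> Ha $ i + Hb $ i else 0))"
proof -
  have eq: "Wb $ i * rho (z \<bullet> Wa $ i + Ba $ i) (z \<bullet> Ha $ i + Hb $ i)
      = Wb $ i * (if z \<bullet> Wa $ i + Ba $ i > 0 then z \<bullet> Ha $ i + Hb $ i else 0)" for i
    using bnd[of i] by (cases "Wb $ i = 0") (auto simp: rho_def)
  show ?thesis unfolding Dn_def prod.case by (simp only: eq)
qed

lemma g_tilde_nonneg: "g_tilde n x v b \<ge> 0"
proof -
  have "(\<Sum>j\<in>active n x v b. x j \<bullet> v - b) \<ge> 0"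
    by (rule sum_nonneg) (auto simp: active_def)
  then show ?thesis unfolding g_tilde_def Let_def by (auto intro!: mult_nonneg_nonneg divide_nonneg_nonneg)
qed

lemma g_fun_nonneg: "g_fun n x v b \<ge> 0"
  unfolding g_fun_def using g_tilde_nonneg[of n x v b] g_tilde_nonneg[of n x "-v" "-b"] by (simp add: min_def)

lemma g_fun_even: "g_fun n x (- v) (- b) = g_fun n x v b"
  unfolding g_fun_def by (simp add: min.commute)



lemma M_facts:
  fixes W :: "(real^'d::finite)^'k::finite" and B1 W2 :: "real^'k" and b2 :: real
    and x :: "nat \<Rightarrow> real^'d"
  assumes n: "n > 0"
    and bnd: "\<And>i j. W2 $ i \<noteq> 0 \<Longrightarrow> j < n \<Longrightarrow> x j \<bullet> W $ i + B1 $ i \<noteq> 0"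
  assumes pre_def: "pre = (\<lambda>i j. x j \<bullet> W $ i + B1 $ i)"
    and J_def: "J = (\<lambda>i. {j. j < n \<and> pre i j > 0})"
    and S_def: "S = (\<lambda>i. \<Sum>j\<in>J i. x j)"
    and al_def: "al = (\<lambda>i. (1 / real n) * (\<Sum>j<n. relu (pre i j)))"
    and be_def: "be = (\<lambda>i. (W2 $ i / real n) *\<^sub>R S i)"
    and ga_def: "ga = (\<lambda>i. W2 $ i * real (card (J i)) / real n)"
    and h0_def: "h0 = ((\<chi> i. be i), (\<chi> i. ga i), (\<chi> i. al i), (1::real))"
    and M_def: "M = 1 + (\<Sum>i\<in>UNIV. (al i)^2 + be i \<bullet> be i + (ga i)^2)"
  shows "h0 \<bullet> h0 = M" and "(\<Sum>j<n. Dn (W, B1, W2, b2) h0 (x j)) = real n * M"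
proof -
  show "h0 \<bullet> h0 = M"
    unfolding h0_def M_def by (simp add: inner_vec_def sum.distrib power2_eq_square algebra_simps)
next
  have nn: "real n > 0" using n by simp
  have vb: "(\<chi> i. be i) $ i = be i" "(\<chi> i. ga i) $ i = ga i" for i by simp_all
  have D: "Dn (W, B1, W2, b2) h0 (x j) = 1 + (\<Sum>i\<in>UNIV. al i * relu (pre i j)
        + W2 $ i * (if pre i j > 0 then x j \<bullet> be i + ga i else 0))" if "j < n" for j
  proof -
    have "Dn (W, B1, W2, b2) h0 (x j) = 1 + (\<Sum>i\<in>UNIV. al i * relu (pre i j)
        + W2 $ i * rho (pre i j) (x j \<bullet> be i + ga i))"
      unfolding h0_def Dn_def pre_def by simp
    also have "\<dots> = 1 + (\<Sum>i\<in>UNIV. al i * relu (pre i j)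
        + W2 $ i * (if pre i j > 0 then x j \<bullet> be i + ga i else 0))"
    proof (intro arg_cong[where f = "\<lambda>u. 1 + u"] sum.cong refl)
      fix i
      show "al i * relu (pre i j) + W2 $ i * rho (pre i j) (x j \<bullet> be i + ga i)
          = al i * relu (pre i j) + W2 $ i * (if pre i j > 0 then x j \<bullet> be i + ga i else 0)"
        using bnd[of i j] that unfolding pre_def by (cases "W2 $ i = 0") (auto simp: rho_def)
    qed
    finally show ?thesis .
  qed
  have sumrelu: "(\<Sum>j<n. relu (pre i j)) = real n * al i" for i
    unfolding al_def using nn by simp
  have sumif: "(\<Sum>j<n. (if pre i j > 0 then x j \<bullet> be i + ga i else 0)) = S i \<bullet> be i + real (card (J i)) * ga i" for i
  proof -
    have "(\<Sum>j<n. (if pre i j > 0 then x j \<bullet> be i + ga i else 0)) = (\<Sum>j\<in>J i. x j \<bullet> be i + ga i)"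
      unfolding J_def by (simp add: sum.inter_filter[symmetric] lessThan_def conj_commute)
    also have "\<dots> = S i \<bullet> be i + real (card (J i)) * ga i"
      unfolding S_def by (simp add: sum.distrib inner_sum_left)
    finally show ?thesis .
  qed
  have W2eq: "W2 $ i * (S i \<bullet> be i + real (card (J i)) * ga i) = real n * (be i \<bullet> be i + (ga i)^2)" for i
    unfolding be_def ga_def using nn by (simp add: field_simps power2_eq_square)
  have "(\<Sum>j<n. Dn (W, B1, W2, b2) h0 (x j)) = (\<Sum>j<n. 1 + (\<Sum>i\<in>UNIV. al i * relu (pre i j)
        + W2 $ i * (if pre i j > 0 then x j \<bullet> be i + ga i else 0)))"
    by (rule sum.cong) (simp_all add: D)
  also have "\<dots> = real n + (\<Sum>i\<in>UNIV. al i * (\<Sum>j<n. relu (pre i j))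
        + W2 $ i * (\<Sum>j<n. (if pre i j > 0 then x j \<bullet> be i + ga i else 0)))"
    by (simp add: sum.distrib sum_distrib_left sum.swap[of _ "{..<n}"])
  also have "\<dots> = real n + (\<Sum>i\<in>UNIV. real n * (al i)^2 + real n * (be i \<bullet> be i + (ga i)^2))"
  proof (intro arg_cong[where f = "\<lambda>u. real n + u"] sum.cong refl)
    fix i
    have "al i * (\<Sum>j<n. relu (pre i j)) = real n * (al i)^2"
      unfolding sumrelu by (simp add: power2_eq_square)
    moreover have "W2 $ i * (\<Sum>j<n. (if pre i j > 0 then x j \<bullet> be i + ga i else 0))
        = real n * (be i \<bullet> be i + (ga i)^2)"
      unfolding sumif by (rule W2eq)
    ultimately show "al i * (\<Sum>j<n. relu (pre i j))
        + W2 $ i * (\<Sum>j<n. (if pre i j > 0 then x j \<bullet> be i + ga i else 0))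
        = real n * (al i)^2 + real n * (be i \<bullet> be i + (ga i)^2)" by simp
  qed
  also have "\<dots> = real n * M"
    unfolding M_def by (simp add: sum_distrib_left[symmetric] distrib_left sum.distrib algebra_simps)
  finally show "(\<Sum>j<n. Dn (W, B1, W2, b2) h0 (x j)) = real n * M" .
qed

lemma neuron_bound:
  fixes W :: "(real^'d::finite)^'k::finite" and B1 W2 :: "real^'k"
    and x :: "nat \<Rightarrow> real^'d"
  assumes n: "n > 0"
  assumes pre_def: "pre = (\<lambda>i j. x j \<bullet> W $ i + B1 $ i)"
    and J_def: "J = (\<lambda>i. {j. j < n \<and> pre i j > 0})"
    and S_def: "S = (\<lambda>i. \<Sum>j\<in>J i. x j)"
    and al_def: "al = (\<lambda>i. (1 / real n) * (\<Sum>j<n. relu (pre i j)))"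
    and be_def: "be = (\<lambda>i. (W2 $ i / real n) *\<^sub>R S i)"
    and ga_def: "ga = (\<lambda>i. W2 $ i * real (card (J i)) / real n)"
  shows "(al i)^2 + be i \<bullet> be i + (ga i)^2 \<ge> 2 * (if W $ i \<noteq> 0 then
      \<bar>W2 $ i * norm (W $ i)\<bar> * g_fun n x ((1 / norm (W $ i)) *\<^sub>R W $ i) (- B1 $ i / norm (W $ i)) else 0)"
proof -
  have nn: "real n > 0" using n by simp
  have "(\<Sum>j<n. relu (pre i j)) \<ge> 0" by (rule sum_nonneg) (simp add: relu_def)
  then have al0: "al i \<ge> 0" unfolding al_def by simp
  define B where "B = be i \<bullet> be i + (ga i)^2"
  have B0: "B \<ge> 0" unfolding B_def by simp
  have amgm: "(al i)^2 + B \<ge> 2 * (al i * sqrt B)"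
  proof -
    have "0 \<le> (al i - sqrt B)^2" by simp
    also have "\<dots> = (al i)^2 + B - 2 * (al i * sqrt B)" using B0 by (simp add: power2_diff)
    finally show ?thesis by simp
  qed
  have main: "al i * sqrt B \<ge> \<bar>W2 $ i * norm (W $ i)\<bar> * g_fun n x ((1 / norm (W $ i)) *\<^sub>R W $ i) (- B1 $ i / norm (W $ i))"
    if W0: "W $ i \<noteq> 0"
  proof -
    define nw where "nw = norm (W $ i)"
    have nw: "nw > 0" using W0 by (simp add: nw_def)
    define v' where "v' = (1 / nw) *\<^sub>R W $ i"
    define t' where "t' = - B1 $ i / nw"
    have lin: "x j \<bullet> v' - t' = pre i j / nw" for j
      unfolding v'_def t'_def pre_def using nw by (simp add: field_simps inner_commute)
    have act: "active n x v' t' = J i"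
    proof -
      have "x j \<bullet> v' > t' \<longleftrightarrow> pre i j > 0" for j
        using lin[of j] nw by (smt (verit) divide_pos_pos divide_nonpos_pos)
      then show ?thesis unfolding active_def J_def by auto
    qed
    have g_le: "g_fun n x v' t' \<le> g_tilde n x v' t'" unfolding g_fun_def by simp
    have gt: "al i * sqrt B \<ge> \<bar>W2 $ i * nw\<bar> * g_tilde n x v' t'"
    proof (cases "J i = {}")
      case True
      then show ?thesis using act al0 B0 by (simp add: g_tilde_def)
    next
      case False
      define c where "c = real (card (J i))"
      have finJ: "finite (J i)" unfolding J_def by simp
      have c0: "c > 0" using False finJ by (simp add: c_def card_gt_0_iff)
      have sumJ: "(\<Sum>j\<in>J i. x j \<bullet> v' - t') = real n * al i / nw"
      proof -
        have "(\<Sum>j\<in>J i. x j \<bullet> v' - t') = (\<Sum>j\<in>J i. pre i j) / nw"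
          by (simp add: lin sum_divide_distrib)
        also have "(\<Sum>j\<in>J i. pre i j) = (\<Sum>j<n. relu (pre i j))"
        proof -
          have "(\<Sum>j<n. relu (pre i j)) = (\<Sum>j<n. if pre i j > 0 then pre i j else 0)"
            by (rule sum.cong) (auto simp: relu_def)
          also have "\<dots> = (\<Sum>j\<in>J i. pre i j)"
            unfolding J_def by (simp add: sum.inter_filter[symmetric] lessThan_def conj_commute)
          finally show ?thesis by simp
        qed
        also have "\<dots> = real n * al i" unfolding al_def using nn by simp
        finally show ?thesis .
      qed
      have nsq: "norm (S i) * norm (S i) = S i \<bullet> S i" by (metis power2_eq_square power2_norm_eq_inner)
      have nS: "(norm ((1 / c) *\<^sub>R S i))^2 + 1 = (S i \<bullet> S i + c^2) / c^2"
        using c0 by (simp add: power2_norm_eq_inner field_simps power2_eq_square nsq)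
      have sq: "sqrt ((S i \<bullet> S i + c^2) / c^2) = sqrt (S i \<bullet> S i + c^2) / c"
        using c0 by (simp add: real_sqrt_divide)
      have gtv: "g_tilde n x v' t' = al i * sqrt (S i \<bullet> S i + c^2) / (real n * nw)"
      proof -
        have Si: "(\<Sum>j\<in>J i. x j) = S i" using S_def by simp
        have "g_tilde n x v' t' = (c / real n)^2 * ((\<Sum>j\<in>J i. x j \<bullet> v' - t') / c)
             * sqrt ((norm ((1 / c) *\<^sub>R (\<Sum>j\<in>J i. x j)))^2 + 1)"
          unfolding g_tilde_def Let_def act c_def using False by (simp only: if_False)
        also have "\<dots> = (c / real n)^2 * ((real n * al i / nw) / c) * (sqrt (S i \<bullet> S i + c^2) / c)"
          by (simp only: Si sumJ nS sq)
        also have "\<dots> = al i * sqrt (S i \<bullet> S i + c^2) / (real n * nw)"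
          using c0 nn nw by (simp add: field_simps power2_eq_square)
        finally show ?thesis .
      qed
      have Bq: "B = (W2 $ i / real n)^2 * (S i \<bullet> S i + c^2)"
        unfolding B_def be_def ga_def c_def using nn by (simp add: field_simps power2_eq_square)
      have sB: "sqrt B = \<bar>W2 $ i\<bar> / real n * sqrt (S i \<bullet> S i + c^2)"
        unfolding Bq using nn by (simp add: real_sqrt_mult)
      have "\<bar>W2 $ i * nw\<bar> * g_tilde n x v' t' = al i * sqrt B"
        unfolding gtv sB using nw nn by (simp add: abs_mult field_simps)
      then show ?thesis by simp
    qed
    have "\<bar>W2 $ i * nw\<bar> * g_fun n x v' t' \<le> \<bar>W2 $ i * nw\<bar> * g_tilde n x v' t'"
      using g_le by (simp add: mult_left_mono)
    then show ?thesis using gt unfolding v'_def t'_def nw_def by simp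
  qed
  show ?thesis
  proof (cases "W $ i \<noteq> 0")
    case True
    then show ?thesis using main[OF True] amgm unfolding B_def by simp
  next
    case False
    then show ?thesis using al0 B0 unfolding B_def by simp
  qed
qed



theorem lemma3:
  fixes n :: nat and x :: "nat \<Rightarrow> real^'d::finite" and y :: "nat \<Rightarrow> real"
    and \<theta> :: "('d, 'k::finite) params" and H :: "('d, 'k) params \<Rightarrow> ('d, 'k) params"
    and m :: nat and a :: "nat \<Rightarrow> real" and v :: "nat \<Rightarrow> real^'d" and b :: "nat \<Rightarrow> real"
    and q :: "real^'d" and c :: real
  assumes "n > 0"
    and min: "\<forall>\<theta>' :: ('d, 'k) params. loss n x y \<theta> \<le> loss n x y \<theta>'"
    and hess: "twice_diff_hessian (loss n x y) \<theta> H"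
    and interp: "\<forall>j<n. net \<theta> (x j) = y j"
    and unit: "\<forall>i<m. norm (v i) = 1"
    and repr: "\<forall>z. net \<theta> z = (\<Sum>i<m. a i * relu (v i \<bullet> z - b i)) + q \<bullet> z + c"
  shows "lambda_max H \<ge> 1 + 2 * radon_norm (g_fun n x) m a v b"
proof -
  have n: "n > 0" by fact
  have nn: "real n > 0" using n by simp
  obtain W B1 W2 b2 where th: "\<theta> = (W, B1, W2, b2)" by (cases \<theta>) auto
  have "(grad (loss n x y) has_derivative H) (at \<theta>)"
    using hess unfolding twice_diff_hessian_def by blast
  then have bl: "bounded_linear H" using has_derivative_bounded_linear by blast
  then have lin: "linear H" using bounded_linear.linear by blast
  have symH: "H u \<bullet> w = u \<bullet> H w" for u w
    using hess_sym[OF hess, of u w] by (simp add: inner_commute)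
  have QF: "h \<bullet> H h = (1 / real n) * (\<Sum>j<n. (Dn \<theta> h (x j))^2)" for h
    using Q_formula[OF n min hess interp] by blast
  have bnd: "x j \<bullet> W $ i + B1 $ i \<noteq> 0" if "W2 $ i \<noteq> 0" "j < n" for i j
    using boundary[OF n lin QF th that] .
  define pre where "pre = (\<lambda>i j. x j \<bullet> W $ i + B1 $ i)"
  define J where "J = (\<lambda>i. {j. j < n \<and> pre i j > 0})"
  define S where "S = (\<lambda>i. \<Sum>j\<in>J i. x j)"
  define al where "al = (\<lambda>i. (1 / real n) * (\<Sum>j<n. relu (pre i j)))"
  define be where "be = (\<lambda>i. (W2 $ i / real n) *\<^sub>R S i)"
  define ga where "ga = (\<lambda>i. W2 $ i * real (card (J i)) / real n)"
  define h0 where "h0 = ((\<chi> i. be i), (\<chi> i. ga i), (\<chi> i. al i), (1::real))"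
  define M where "M = 1 + (\<Sum>i\<in>UNIV. (al i)^2 + be i \<bullet> be i + (ga i)^2)"
  note MF = M_facts[OF n bnd pre_def J_def S_def al_def be_def ga_def h0_def M_def]
  have M1: "M \<ge> 1" unfolding M_def by (simp add: sum_nonneg)
  have QM: "M^2 \<le> h0 \<bullet> H h0"
  proof -
    have "(\<Sum>j<n. Dn \<theta> h0 (x j))^2 \<le> (\<Sum>j<n. (Dn \<theta> h0 (x j))^2) * real (card {..<n})"
      by (rule sum_squared_le_sum_of_squares)
    then have "(real n * M)^2 \<le> (\<Sum>j<n. (Dn \<theta> h0 (x j))^2) * real n"
      using MF(2) th by simp
    then have "real n * M^2 \<le> (\<Sum>j<n. (Dn \<theta> h0 (x j))^2)"
      using nn by (simp add: power2_eq_square field_simps)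
    then have "M^2 \<le> (1 / real n) * (\<Sum>j<n. (Dn \<theta> h0 (x j))^2)"
      using nn by (simp add: field_simps)
    then show ?thesis using QF[of h0] by simp
  qed
  have "h0 \<bullet> H h0 \<le> lambda_max H * (norm h0)^2"
    by (rule sym_eigen_max[OF lin symH])
  also have "(norm h0)^2 = M" using MF(1) by (simp add: power2_norm_eq_inner)
  finally have "M * M \<le> lambda_max H * M" using QM by (simp add: power2_eq_square)
  then have lamM: "M \<le> lambda_max H" using M1 by simp
  define K where "K = {k. W $ k \<noteq> 0}"
  define a' where "a' = (\<lambda>k. W2 $ k * norm (W $ k))"
  define v' where "v' = (\<lambda>k. (1 / norm (W $ k)) *\<^sub>R W $ k)"
  define t' where "t' = (\<lambda>k. - B1 $ k / norm (W $ k))"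
  have NB: "M \<ge> 1 + 2 * (\<Sum>k\<in>K. \<bar>a' k\<bar> * g_fun n x (v' k) (t' k))"
  proof -
    have "(\<Sum>i\<in>UNIV. (al i)^2 + be i \<bullet> be i + (ga i)^2)
        \<ge> (\<Sum>i\<in>UNIV. 2 * (if W $ i \<noteq> 0 then \<bar>a' i\<bar> * g_fun n x (v' i) (t' i) else 0))"
      unfolding a'_def v'_def t'_def
      by (rule sum_mono) (rule neuron_bound[OF n pre_def J_def S_def al_def be_def ga_def])
    also have "(\<Sum>i\<in>UNIV. 2 * (if W $ i \<noteq> 0 then \<bar>a' i\<bar> * g_fun n x (v' i) (t' i) else 0))
        = 2 * (\<Sum>k\<in>K. \<bar>a' k\<bar> * g_fun n x (v' k) (t' k))"
      unfolding K_def by (simp add: sum_distrib_left[symmetric] sum.inter_filter[symmetric])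
    finally show ?thesis unfolding M_def by simp
  qed
  have finK: "finite K" by simp
  have unitK: "\<forall>k\<in>K. norm (v' k) = 1" unfolding K_def v'_def by simp
  define C0 where "C0 = (\<Sum>k\<in>UNIV - K. W2 $ k * relu (B1 $ k)) + b2"
  have eqz: "\<forall>z. (\<Sum>i<m. a i * relu (v i \<bullet> z - b i)) + q \<bullet> z + (c - C0)
      = (\<Sum>k\<in>K. a' k * relu (v' k \<bullet> z - t' k))"
  proof
    fix z
    have nz: "net \<theta> z = (\<Sum>k\<in>UNIV. W2 $ k * relu (z \<bullet> W $ k + B1 $ k)) + b2"
      unfolding th net_def by simp
    have "(\<Sum>k\<in>UNIV. W2 $ k * relu (z \<bullet> W $ k + B1 $ k))
        = (\<Sum>k\<in>K. W2 $ k * relu (z \<bullet> W $ k + B1 $ k)) + (\<Sum>k\<in>UNIV - K. W2 $ k * relu (z \<bullet> W $ k + B1 $ k))"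
      using sum.subset_diff[of K UNIV "\<lambda>k. W2 $ k * relu (z \<bullet> W $ k + B1 $ k)"] by simp
    also have "(\<Sum>k\<in>UNIV - K. W2 $ k * relu (z \<bullet> W $ k + B1 $ k)) = (\<Sum>k\<in>UNIV - K. W2 $ k * relu (B1 $ k))"
      by (rule sum.cong) (auto simp: K_def)
    also have "(\<Sum>k\<in>K. W2 $ k * relu (z \<bullet> W $ k + B1 $ k)) = (\<Sum>k\<in>K. a' k * relu (v' k \<bullet> z - t' k))"
    proof (rule sum.cong[OF refl])
      fix k assume k: "k \<in> K"
      define nw where "nw = norm (W $ k)"
      have nw: "nw > 0" using k by (simp add: K_def nw_def)
      have "z \<bullet> W $ k + B1 $ k = nw * (v' k \<bullet> z - t' k)"
        unfolding v'_def t'_def nw_def[symmetric] using nw by (simp add: field_simps inner_commute)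
      then have "relu (z \<bullet> W $ k + B1 $ k) = nw * relu (v' k \<bullet> z - t' k)"
        using relu_pos_scale[OF nw, of "v' k \<bullet> z - t' k"] by (simp add: mult.commute)
      then show "W2 $ k * relu (z \<bullet> W $ k + B1 $ k) = a' k * relu (v' k \<bullet> z - t' k)"
        unfolding a'_def nw_def by simp
    qed
    finally have "net \<theta> z = (\<Sum>k\<in>K. a' k * relu (v' k \<bullet> z - t' k)) + C0"
      unfolding nz C0_def by simp
    then show "(\<Sum>i<m. a i * relu (v i \<bullet> z - b i)) + q \<bullet> z + (c - C0)
      = (\<Sum>k\<in>K. a' k * relu (v' k \<bullet> z - t' k))"
      using repr[rule_format, of z] by simp
  qed
  have same: "(\<Sum>i\<in>{i. i < m \<and> ((v i, b i) = p \<or> (v i, b i) = (- fst p, - snd p))}. a i)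
       = (\<Sum>k\<in>{k\<in>K. (v' k, t' k) = p \<or> (v' k, t' k) = (- fst p, - snd p)}. a' k)" for p
    by (rule same_atoms[OF finK unit unitK eqz])
  have RB: "radon_norm (g_fun n x) m a v b \<le> (\<Sum>k\<in>K. \<bar>a' k\<bar> * g_fun n x (v' k) (t' k))"
    by (rule radon_bound[where g = "g_fun n x", OF g_fun_nonneg g_fun_even finK unitK same])
  show ?thesis using lamM NB RB by linarith
qed


end
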